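(* Let $\mathcal{L}$ be a lattice and $\{a_I\}_{I\in\mathcal{L}}$ real numbers such that $\{|a_I|\}_{I\in\mathcal{L}}$ is a Carleson sequence, and suppose the balayage $g=\sum_{I\in\mathcal{L}}\frac{1}{|I|}\mathbf{1}_Ia_I$ is well defined, i.e. $\sum_{I\in\mathcal{L}}\frac{1}{|I|}\mathbf{1}_I|a_I|$ is finite a.e. and locally integrable. Then $g$ belongs to martingale BMO and $$\|g\|_{\mathrm{BMO}}\le 2\,\mathrm{Carl}(|a_I|).$$
   Context: Work on $\mathbb{R}$ with Lebesgue measure. A lattice $\mathcal{L}$ is a collection of nondegenerate finite intervals of $\mathbb{R}$ which is a union of generations $\mathcal{L}_k$, $k\in\mathbb{Z}$, each $\mathcal{L}_k$ a collection of pairwise disjoint intervals covering $\mathbb{R}$, with every $I\in\mathcal{L}_k$ a finite disjoint union of intervals of $\mathcal{L}_{k+1}$ (possibly of $I$ alone). For $I\in\mathcal{L}$ with $\mathrm{rk}(I)=k$ (the largest $k$ with $I\in\mathcal{L}_k$), $\mathrm{child}(I)$ is the set of $J\in\mathcal{L}_{k+1}$ with $J\subseteq I$. $\mathfrak{A}_{-\infty}^{0,\mathrm{fin}}$ is the collection of sets $\bigcup_kI_k$ ($I_k\in\mathcal{L}_k$, $I_k\subseteq I_{k-1}$) of finite measure. $\langle f\rangle_I=\frac1{|I|}\int_If$, $\mathbb{E}_If=\langle f\rangle_I\mathbf{1}_I$, $\Delta_If=-\mathbb{E}_If+\sum_{J\in\mathrm{child}(I)}\mathbb{E}_Jf$.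 A sequence of nonnegative numbers $\{b_I\}_{I\in\mathcal{L}}$ is a Carleson sequence if there is $C>0$ with $\frac1{|I|}\sum_{J\in\mathcal{L},J\subseteq I}b_J\le C$ for every $I\in\mathcal{L}\cup\mathfrak{A}_{-\infty}^{0,\mathrm{fin}}$; $\mathrm{Carl}(b_I)$ is the infimum of such $C$. A locally integrable $g$ is in martingale BMO if $C_1=\sup_{I\in\mathcal{L}}\big[\frac1{|I|}\int_I\sum_{J\in\mathcal{L},J\subseteq I}|\Delta_Jg|^2\big]^{1/2}<\infty$ and $C_2=\sup_{I\in\mathcal{L}}\|\Delta_Ig\|_\infty<\infty$; then $\|g\|_{\mathrm{BMO}}=\max\{C_1,C_2\}$. *)

theory Defs
  imports "HOL-Analysis.Analysis"
begin

text \<open>A lattice is given by its generations L :: int => real set set.\<close>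

definition nondeg_finite_interval :: "real set \<Rightarrow> bool" where
  "nondeg_finite_interval I \<longleftrightarrow> is_interval I \<and> bounded I \<and> interior I \<noteq> {}"

definition lattice :: "(int \<Rightarrow> real set set) \<Rightarrow> bool" where
  "lattice L \<longleftrightarrow>
     (\<forall>k. \<forall>I\<in>L k. nondeg_finite_interval I) \<and>
     (\<forall>k. pairwise disjnt (L k) \<and> \<Union>(L k) = UNIV) \<and>
     (\<forall>k. \<forall>I\<in>L k. \<exists>F. finite F \<and> F \<subseteq> L (k + 1) \<and> \<Union>F = I) \<and>
     (\<forall>I\<in>(\<Union>k. L k). bdd_above {k. I \<in> L k})"

definition lat :: "(int \<Rightarrow> real set set) \<Rightarrow> real set set" where
  "lat L = (\<Union>k. L k)"

definition rk :: "(int \<Rightarrow> real set set) \<Rightarrow> real set \<Rightarrow> int" where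
  "rk L I = (GREATEST k. I \<in> L k)"

definition child :: "(int \<Rightarrow> real set set) \<Rightarrow> real set \<Rightarrow> real set set" where
  "child L I = {J \<in> L (rk L I + 1). J \<subseteq> I}"

definition A_fin :: "(int \<Rightarrow> real set set) \<Rightarrow> real set set" where
  "A_fin L = {S. \<exists>I :: int \<Rightarrow> real set. (\<forall>k. I k \<in> L k \<and> I k \<subseteq> I (k - 1))
                  \<and> S = (\<Union>k. I k) \<and> emeasure lebesgue S < \<infinity>}"

definition carleson_bound :: "(int \<Rightarrow> real set set) \<Rightarrow> (real set \<Rightarrow> real) \<Rightarrow> real \<Rightarrow> bool" where
  "carleson_bound L b C \<longleftrightarrow> C > 0 \<and>
     (\<forall>I \<in> lat L \<union> A_fin L.
        (\<Sum>\<^sub>\<infinity>J\<in>{J\<in>lat L. J \<subseteq> I}. ennreal (b J)) \<le> ennreal (C * measure lebesgue I))"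

definition carleson_seq :: "(int \<Rightarrow> real set set) \<Rightarrow> (real set \<Rightarrow> real) \<Rightarrow> bool" where
  "carleson_seq L b \<longleftrightarrow> (\<forall>I\<in>lat L. b I \<ge> 0) \<and> (\<exists>C. carleson_bound L b C)"

definition Carl :: "(int \<Rightarrow> real set set) \<Rightarrow> (real set \<Rightarrow> real) \<Rightarrow> real" where
  "Carl L b = Inf {C. carleson_bound L b C}"

definition avg :: "real set \<Rightarrow> (real \<Rightarrow> real) \<Rightarrow> real" where
  "avg I f = (LINT x:I|lebesgue. f x) / measure lebesgue I"

definition E :: "real set \<Rightarrow> (real \<Rightarrow> real) \<Rightarrow> real \<Rightarrow> real" where
  "E I f x = avg I f * indicator I x"

definition Delta :: "(int \<Rightarrow> real set set) \<Rightarrow> real set \<Rightarrow> (real \<Rightarrow> real) \<Rightarrow> real \<Rightarrow> real" where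
  "Delta L I f x = - E I f x + (\<Sum>J\<in>child L I. E J f x)"

definition ennsqrt :: "ennreal \<Rightarrow> ennreal" where
  "ennsqrt x = (if x = top then top else ennreal (sqrt (enn2real x)))"

definition Linf_norm :: "(real \<Rightarrow> real) \<Rightarrow> ennreal" where
  "Linf_norm f = Inf {c. AE x in lebesgue. ennreal \<bar>f x\<bar> \<le> c}"

definition BMO_C1 :: "(int \<Rightarrow> real set set) \<Rightarrow> (real \<Rightarrow> real) \<Rightarrow> ennreal" where
  "BMO_C1 L g = (SUP I\<in>lat L. ennsqrt (ennreal (1 / measure lebesgue I) *
       (\<integral>\<^sup>+x\<in>I. (\<Sum>\<^sub>\<infinity>J\<in>{J\<in>lat L. J \<subseteq> I}. ennreal ((Delta L J g x)\<^sup>2)) \<partial>lebesgue)))"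

definition BMO_C2 :: "(int \<Rightarrow> real set set) \<Rightarrow> (real \<Rightarrow> real) \<Rightarrow> ennreal" where
  "BMO_C2 L g = (SUP I\<in>lat L. Linf_norm (Delta L I g))"

definition locally_integrable :: "(real \<Rightarrow> real) \<Rightarrow> bool" where
  "locally_integrable g \<longleftrightarrow> (\<forall>a b. set_integrable lebesgue {a..b} g)"

definition in_mBMO :: "(int \<Rightarrow> real set set) \<Rightarrow> (real \<Rightarrow> real) \<Rightarrow> bool" where
  "in_mBMO L g \<longleftrightarrow> locally_integrable g \<and> BMO_C1 L g < top \<and> BMO_C2 L g < top"

definition BMO_norm :: "(int \<Rightarrow> real set set) \<Rightarrow> (real \<Rightarrow> real) \<Rightarrow> ennreal" where
  "BMO_norm L g = max (BMO_C1 L g) (BMO_C2 L g)"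

definition abs_balayage :: "(int \<Rightarrow> real set set) \<Rightarrow> (real set \<Rightarrow> real) \<Rightarrow> real \<Rightarrow> ennreal" where
  "abs_balayage L a x = (\<Sum>\<^sub>\<infinity>I\<in>lat L. ennreal (\<bar>a I\<bar> / measure lebesgue I * indicator I x))"

definition balayage :: "(int \<Rightarrow> real set set) \<Rightarrow> (real set \<Rightarrow> real) \<Rightarrow> real \<Rightarrow> real" where
  "balayage L a x = (\<Sum>\<^sub>\<infinity>I\<in>lat L. a I / measure lebesgue I * indicator I x)"

definition locally_integrable_nn :: "(real \<Rightarrow> ennreal) \<Rightarrow> bool" where
  "locally_integrable_nn G \<longleftrightarrow> G \<in> borel_measurable lebesgue \<and>
     (\<forall>a b. (\<integral>\<^sup>+x\<in>{a..b}. G x \<partial>lebesgue) < \<infinity>)"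

end

theory Submission
  imports Defs
begin


locale latt =
  fixes L :: "int \<Rightarrow> real set set"
  assumes lat_L: "lattice L"
begin

lemma nondeg: "I \<in> L k \<Longrightarrow> nondeg_finite_interval I"
  using lat_L unfolding lattice_def by blast

lemma disj_L: "pairwise disjnt (L k)" and cover_L: "\<Union>(L k) = UNIV"
  using lat_L unfolding lattice_def by blast+

lemma split_L: "I \<in> L k \<Longrightarrow> \<exists>F. finite F \<and> F \<subseteq> L (k + 1) \<and> \<Union>F = I"
  using lat_L unfolding lattice_def by blast

lemma bdd_L: "I \<in> L k \<Longrightarrow> bdd_above {k. I \<in> L k}"
  using lat_L unfolding lattice_def by auto

lemma L_lmeas: "I \<in> L k \<Longrightarrow> I \<in> lmeasurable"
  using nondeg[of I k] unfolding nondeg_finite_interval_def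
  by (simp add: is_interval_convex measurable_convex)

lemma L_sets: "I \<in> L k \<Longrightarrow> I \<in> sets lebesgue"
  using L_lmeas by (simp add: fmeasurableD)

lemma L_fin: "I \<in> L k \<Longrightarrow> emeasure lebesgue I < \<infinity>"
  using L_lmeas[of I k] unfolding fmeasurable_def by blast

lemma L_pos: "I \<in> L k \<Longrightarrow> 0 < measure lebesgue I"
proof -
  assume I: "I \<in> L k"
  then obtain x where "x \<in> interior I" using nondeg[OF I] unfolding nondeg_finite_interval_def by auto
  then obtain e where e: "e > 0" "ball x e \<subseteq> I"
    by (meson open_contains_ball_eq open_interior interior_subset subset_trans)
  have "measure lebesgue (ball x e) \<le> measure lebesgue I"
    using e L_lmeas[OF I] by (intro measure_mono_fmeasurable) auto
  moreover have "measure lebesgue (ball x e) = 2 * e"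
    using e by (simp add: ball_eq_greaterThanLessThan)
  ultimately show ?thesis using e by simp
qed

lemma L_ne: "I \<in> L k \<Longrightarrow> I \<noteq> {}"
  using L_pos by fastforce

lemma L_bounded: "I \<in> L k \<Longrightarrow> bounded I"
  using nondeg unfolding nondeg_finite_interval_def by blast

lemma same_gen: "I \<in> L k \<Longrightarrow> J \<in> L k \<Longrightarrow> I \<inter> J \<noteq> {} \<Longrightarrow> I = J"
  using disj_L[of k] unfolding pairwise_def disjnt_def by blast

lemma parent1: "I \<in> L (k + 1) \<Longrightarrow> \<exists>I'\<in>L k. I \<subseteq> I'"
proof -
  assume I: "I \<in> L (k + 1)"
  have "I \<noteq> {}" using L_ne[OF I] .
  then obtain x where x: "x \<in> I" by blast
  have "x \<in> \<Union>(L k)" using cover_L[of k] by simp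
  then obtain I' where I': "I' \<in> L k" "x \<in> I'" by blast
  obtain F where F: "finite F" "F \<subseteq> L (k+1)" "\<Union>F = I'" using split_L[OF I'(1)] by blast
  have "x \<in> \<Union>F" using F(3) I'(2) by simp
  then obtain K where K: "K \<in> F" "x \<in> K" by blast
  have KL: "K \<in> L (k+1)" using K(1) F(2) by blast
  have "K \<inter> I \<noteq> {}" using K(2) x by blast
  then have "K = I" by (rule same_gen[OF KL I])
  then have "I \<subseteq> I'" using K(1) F(3) by blast
  then show ?thesis using I'(1) by blast
qed

lemma parent: assumes "n \<le> m" "I \<in> L m" shows "\<exists>I'\<in>L n. I \<subseteq> I'"
  using assms
proof (induction m arbitrary: I rule: int_ge_induct)
  case base then show ?case by blast
next
  case (step m)
  obtain I' where I': "I' \<in> L m" "I \<subseteq> I'" using parent1[OF step.prems] by blast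
  obtain I'' where I'': "I'' \<in> L n" "I' \<subseteq> I''" using step.IH[OF I'(1)] by blast
  show ?case using I' I'' by blast
qed

lemma nest_or_disj: "m \<le> n \<Longrightarrow> I \<in> L m \<Longrightarrow> J \<in> L n \<Longrightarrow> J \<subseteq> I \<or> I \<inter> J = {}"
proof -
  assume a: "m \<le> n" "I \<in> L m" "J \<in> L n"
  then obtain I' where I': "I' \<in> L m" "J \<subseteq> I'" using parent[OF a(1) a(3)] by blast
  show ?thesis
  proof (cases "I \<inter> J = {}")
    case False
    then have "I = I'" using same_gen[of I m I'] a I' by blast
    then show ?thesis using I' by blast
  qed simp
qed

lemma interp: "m \<le> k \<Longrightarrow> k \<le> n \<Longrightarrow> I \<in> L m \<Longrightarrow> I \<in> L n \<Longrightarrow> I \<in> L k"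
proof -
  assume a: "m \<le> k" "k \<le> n" "I \<in> L m" "I \<in> L n"
  obtain I' where I': "I' \<in> L k" "I \<subseteq> I'" using parent[OF a(2) a(4)] by blast
  obtain I'' where I'': "I'' \<in> L m" "I' \<subseteq> I''" using parent[OF a(1) I'(1)] by blast
  have "I'' = I" using same_gen[of I'' m I] I' I'' a L_ne by blast
  then show ?thesis using I' I'' by auto
qed


lemma rk_prop: assumes "I \<in> L k0" shows "I \<in> L (rk L I)" "\<And>k. I \<in> L k \<Longrightarrow> k \<le> rk L I"
proof -
  have "bdd_above {k. I \<in> L k}" using bdd_L[OF assms] .
  then obtain b where b0: "\<forall>k\<in>{k. I \<in> L k}. k \<le> b" unfolding bdd_above_def by blast
  then have b: "\<And>k. I \<in> L k \<Longrightarrow> k \<le> b" by simp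
  define P where "P = {k. I \<in> L k \<and> k0 \<le> k}"
  have "P \<subseteq> {k0..b}" unfolding P_def using b by auto
  then have fin: "finite P" by (rule finite_subset) simp
  have ne: "P \<noteq> {}" using assms unfolding P_def by auto
  define m where "m = Max P"
  have mP: "m \<in> P" unfolding m_def by (rule Max_in[OF fin ne])
  then have m: "I \<in> L m" "k0 \<le> m" unfolding P_def by auto
  have g: "k \<le> m" if k: "I \<in> L k" for k
  proof (cases "k0 \<le> k")
    case True then have "k \<in> P" using k unfolding P_def by simp
    then show ?thesis unfolding m_def by (rule Max_ge[OF fin])
  next
    case False then show ?thesis using m(2) by simp
  qed
  have "rk L I = m" unfolding rk_def by (rule Greatest_equality[where P="\<lambda>k. I \<in> L k", OF m(1) g])
  then show "I \<in> L (rk L I)" using m(1) by simp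
  show "\<And>k. I \<in> L k \<Longrightarrow> k \<le> rk L I" using g \<open>rk L I = m\<close> by simp
qed

lemma lat_iff: "I \<in> lat L \<longleftrightarrow> (\<exists>k. I \<in> L k)" unfolding lat_def by auto

lemma rk_in: "I \<in> lat L \<Longrightarrow> I \<in> L (rk L I)" by (metis rk_prop(1) lat_iff)
lemma rk_ge: "I \<in> L k \<Longrightarrow> k \<le> rk L I" by (rule rk_prop(2))
lemma rk_not: "I \<in> lat L \<Longrightarrow> I \<notin> L (rk L I + 1)"
proof
  assume "I \<in> L (rk L I + 1)"
  then have "rk L I + 1 \<le> rk L I" by (rule rk_ge)
  then show False by simp
qed

lemma lat_lmeas: "I \<in> lat L \<Longrightarrow> I \<in> lmeasurable" by (metis L_lmeas lat_iff)
lemma lat_sets: "I \<in> lat L \<Longrightarrow> I \<in> sets lebesgue" by (metis L_sets lat_iff)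
lemma lat_fin: "I \<in> lat L \<Longrightarrow> emeasure lebesgue I < \<infinity>" by (metis L_fin lat_iff)
lemma lat_pos: "I \<in> lat L \<Longrightarrow> 0 < measure lebesgue I" by (metis L_pos lat_iff)
lemma lat_ne: "I \<in> lat L \<Longrightarrow> I \<noteq> {}" by (metis L_ne lat_iff)
lemma lat_bounded: "I \<in> lat L \<Longrightarrow> bounded I" by (metis L_bounded lat_iff)

lemma lat_nest: "I \<in> lat L \<Longrightarrow> J \<in> lat L \<Longrightarrow> I \<subseteq> J \<or> J \<subseteq> I \<or> I \<inter> J = {}"
proof -
  assume "I \<in> lat L" "J \<in> lat L"
  then obtain m n where mn: "I \<in> L m" "J \<in> L n" using lat_iff by blast
  show ?thesis
  proof (cases "m \<le> n")
    case True then show ?thesis using nest_or_disj[OF True mn] by blast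
  next
    case False then have nm: "n \<le> m" by simp
    show ?thesis using nest_or_disj[OF nm mn(2) mn(1)] by blast
  qed
qed

lemma countable_L: "countable (L k)"
proof (rule countable_disjoint_nonempty_interior_subsets[OF disj_L])
  fix S assume "S \<in> L k" "interior S = {}"
  then show "S = {}" using nondeg[of S k] unfolding nondeg_finite_interval_def by blast
qed

lemma countable_lat: "countable (lat L)"
  unfolding lat_def by (rule countable_UN) (simp_all add: countable_L)

lemma child_sub: "K \<in> child L J \<Longrightarrow> K \<in> L (rk L J + 1) \<and> K \<subseteq> J"
  unfolding child_def by auto

lemma child_lat: "K \<in> child L J \<Longrightarrow> K \<in> lat L"
  using child_sub lat_iff by blast

lemma child_fin: assumes "J \<in> lat L" shows "finite (child L J)"
proof -
  obtain F where F: "finite F" "F \<subseteq> L (rk L J + 1)" "\<Union>F = J" using split_L[OF rk_in[OF assms]] by blast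
  have "child L J \<subseteq> F"
  proof
    fix K assume K: "K \<in> child L J"
    have K1: "K \<in> L (rk L J + 1)" "K \<subseteq> J" using child_sub[OF K] by auto
    then obtain x where x: "x \<in> K" using L_ne by blast
    then have "x \<in> \<Union>F" using K1 F(3) by blast
    then obtain K' where K': "K' \<in> F" "x \<in> K'" by blast
    have "K' \<in> L (rk L J + 1)" using K' F(2) by blast
    then have "K = K'" using same_gen[OF K1(1)] x K' by blast
    then show "K \<in> F" using K' by simp
  qed
  then show ?thesis using F finite_subset by blast
qed

lemma child_Un: assumes "J \<in> lat L" shows "\<Union>(child L J) = J"
proof -
  obtain F where F: "finite F" "F \<subseteq> L (rk L J + 1)" "\<Union>F = J" using split_L[OF rk_in[OF assms]] by blast
  have "F \<subseteq> child L J" using F unfolding child_def by blast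
  then have "J \<subseteq> \<Union>(child L J)" using F(3) by blast
  moreover have "\<Union>(child L J) \<subseteq> J" using child_sub by blast
  ultimately show ?thesis by blast
qed

lemma child_neq: "J \<in> lat L \<Longrightarrow> K \<in> child L J \<Longrightarrow> K \<noteq> J"
proof
  assume a: "J \<in> lat L" "K \<in> child L J" "K = J"
  then have "J \<in> L (rk L J + 1)" using child_sub[OF a(2)] by simp
  then show False using rk_not[OF a(1)] by simp
qed

lemma child_disj: "K \<in> child L J \<Longrightarrow> K' \<in> child L J \<Longrightarrow> K \<inter> K' \<noteq> {} \<Longrightarrow> K = K'"
proof -
  assume a: "K \<in> child L J" "K' \<in> child L J" "K \<inter> K' \<noteq> {}"
  have "K \<in> L (rk L J + 1)" "K' \<in> L (rk L J + 1)" using child_sub a by auto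
  then show "K = K'" using same_gen a(3) by blast
qed

lemma below: assumes "J \<in> lat L" "I \<in> lat L" "I \<subseteq> J" "I \<noteq> J" shows "\<exists>K\<in>child L J. I \<subseteq> K"
proof -
  let ?r = "rk L J" and ?m = "rk L I"
  have J: "J \<in> L ?r" and I: "I \<in> L ?m" using rk_in assms by auto
  have Ine: "I \<noteq> {}" using lat_ne assms by auto
  have "\<not> ?m \<le> ?r"
  proof
    assume "?m \<le> ?r"
    then have "J \<subseteq> I \<or> I \<inter> J = {}" using nest_or_disj[OF _ I J] by auto
    then show False using assms Ine by blast
  qed
  then obtain K where K: "K \<in> L (?r + 1)" "I \<subseteq> K" using parent[of "?r+1" ?m I] I by auto
  have "K \<subseteq> J \<or> J \<inter> K = {}" using nest_or_disj[of ?r "?r+1" J K] J K by auto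
  then have "K \<subseteq> J" using K assms Ine by blast
  then show ?thesis using K unfolding child_def by blast
qed

lemma nobetween: assumes "J \<in> lat L" "K \<in> child L J" "I \<in> lat L" "K \<subseteq> I" "I \<subseteq> J"
  shows "I = K \<or> I = J"
proof -
  let ?r = "rk L J" and ?m = "rk L I"
  have J: "J \<in> L ?r" and I: "I \<in> L ?m" using rk_in assms by auto
  have K1: "K \<in> L (?r + 1)" using child_sub[OF assms(2)] by simp
  have K: "K \<in> L (?r + 1)" "K \<noteq> {}" using K1 L_ne[OF K1] by auto
  show ?thesis
  proof (cases "?r + 1 \<le> ?m")
    case True
    then obtain K' where K': "K' \<in> L (?r+1)" "I \<subseteq> K'" using parent[OF True I] by blast
    then have "K' = K" using same_gen[of K' "?r+1" K] K assms by blast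
    then show ?thesis using K' assms by blast
  next
    case False
    then have "J \<subseteq> I \<or> I \<inter> J = {}" using nest_or_disj[OF _ I J] by auto
    then show ?thesis using assms K by blast
  qed
qed

end



definition ext :: "'a set \<Rightarrow> ('a \<Rightarrow> 'b::zero) \<Rightarrow> nat \<Rightarrow> 'b" where
  "ext A f n = (if n \<in> to_nat_on A ` A then f (from_nat_into A n) else 0)"

lemma has_sum_ext:
  fixes f :: "'a \<Rightarrow> 'b::{comm_monoid_add, topological_space}"
  assumes "countable A"
  shows "(f has_sum s) A \<longleftrightarrow> (ext A f has_sum s) UNIV"
proof -
  let ?h = "to_nat_on A" and ?g = "\<lambda>n. f (from_nat_into A n)"
  have "(f has_sum s) A \<longleftrightarrow> ((?g \<circ> ?h) has_sum s) A"
    by (rule has_sum_cong) (simp add: assms)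
  also have "\<dots> \<longleftrightarrow> (?g has_sum s) (?h ` A)"
    by (rule has_sum_reindex[symmetric]) (simp add: assms inj_on_to_nat_on)
  also have "\<dots> \<longleftrightarrow> (ext A f has_sum s) UNIV"
    by (rule has_sum_cong_neutral) (auto simp: ext_def)
  finally show ?thesis .
qed

lemma ext_ennreal_suminf:
  fixes f :: "'a \<Rightarrow> ennreal"
  assumes "countable A"
  shows "(\<Sum>\<^sub>\<infinity>x\<in>A. f x) = suminf (ext A f)"
proof -
  have "(f has_sum (infsum f A)) A" by (rule has_sum_infsum, rule nonneg_summable_on_complete) simp
  then have "(ext A f has_sum infsum f A) UNIV" using has_sum_ext[OF assms] by blast
  then have "ext A f sums infsum f A" by (rule has_sum_imp_sums)
  then show ?thesis by (simp add: sums_iff)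
qed

lemma ext_real_infsum:
  fixes f :: "'a \<Rightarrow> real"
  assumes "countable A" "summable (\<lambda>n. \<bar>ext A f n\<bar>)"
  shows "f summable_on A" "infsum f A = suminf (ext A f)"
proof -
  have s1: "summable (\<lambda>n. norm (ext A f n))" using assms(2) by simp
  have "ext A f sums suminf (ext A f)" using summable_rabs_cancel[OF assms(2)] by (simp add: summable_sums)
  with s1 have "(ext A f has_sum suminf (ext A f)) UNIV" by (rule norm_summable_imp_has_sum)
  then have h: "(f has_sum suminf (ext A f)) A" using has_sum_ext[OF assms(1)] by blast
  then show "f summable_on A" by (auto simp: summable_on_def)
  show "infsum f A = suminf (ext A f)" using h by (rule infsumI)
qed

lemma ext_abs: "\<bar>ext A f n\<bar> = ext A (\<lambda>x. \<bar>f x\<bar> :: real) n" by (simp add: ext_def)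
lemma ext_ennreal: "ennreal (ext A f n) = ext A (\<lambda>x. ennreal (f x)) n" by (simp add: ext_def)

lemma ennreal_infsum:
  fixes f :: "'a \<Rightarrow> real"
  assumes "f summable_on A" "\<And>x. x \<in> A \<Longrightarrow> 0 \<le> f x"
  shows "ennreal (infsum f A) = (\<Sum>\<^sub>\<infinity>x\<in>A. ennreal (f x))"
proof -
  have "(\<Sum>\<^sub>\<infinity>x\<in>A. ennreal (f x)) = (SUP F\<in>{F. finite F \<and> F \<subseteq> A}. sum (\<lambda>x. ennreal (f x)) F)"
    by (rule nonneg_infsum_complete) simp
  also have "\<dots> = (SUP F\<in>{F. finite F \<and> F \<subseteq> A}. ennreal (sum f F))"
  proof (rule SUP_cong[OF refl])
    fix F assume "F \<in> {F. finite F \<and> F \<subseteq> A}"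
    then have "\<And>x. x \<in> F \<Longrightarrow> 0 \<le> f x" using assms(2) by blast
    then show "sum (\<lambda>x. ennreal (f x)) F = ennreal (sum f F)" by (rule sum_ennreal)
  qed
  finally show ?thesis using infsum_nonneg_is_SUPREMUM_ennreal[OF assms] by simp
qed

lemma ennreal_fin_summable:
  fixes f :: "'a \<Rightarrow> real"
  assumes A: "countable A" and fin: "(\<Sum>\<^sub>\<infinity>x\<in>A. ennreal \<bar>f x\<bar>) < \<infinity>"
  shows "summable (\<lambda>n. \<bar>ext A f n\<bar>)" "f summable_on A" "(\<lambda>x. \<bar>f x\<bar>) summable_on A"
    "ennreal (\<Sum>\<^sub>\<infinity>x\<in>A. \<bar>f x\<bar>) = (\<Sum>\<^sub>\<infinity>x\<in>A. ennreal \<bar>f x\<bar>)"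
proof -
  have eq: "(\<Sum>\<^sub>\<infinity>x\<in>A. ennreal \<bar>f x\<bar>) = (\<Sum>n. ennreal \<bar>ext A f n\<bar>)"
    by (simp add: ext_ennreal_suminf[OF A] ext_abs ext_ennreal)
  show s: "summable (\<lambda>n. \<bar>ext A f n\<bar>)"
    by (rule summable_suminf_not_top) (use fin eq in auto)
  show "f summable_on A" using ext_real_infsum[OF A s] by simp
  have s2: "summable (\<lambda>n. \<bar>ext A (\<lambda>x. \<bar>f x\<bar>) n\<bar>)" using s by (simp add: ext_abs)
  show "(\<lambda>x. \<bar>f x\<bar>) summable_on A" using ext_real_infsum[OF A s2] by simp
  then show "ennreal (\<Sum>\<^sub>\<infinity>x\<in>A. \<bar>f x\<bar>) = (\<Sum>\<^sub>\<infinity>x\<in>A. ennreal \<bar>f x\<bar>)"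
    by (rule ennreal_infsum) simp
qed

lemma summable_ennreal_fin:
  fixes f :: "'a \<Rightarrow> real"
  assumes "f summable_on A"
  shows "(\<Sum>\<^sub>\<infinity>x\<in>A. ennreal \<bar>f x\<bar>) < \<infinity>"
proof -
  have "(\<lambda>x. norm (f x)) summable_on A" using assms summable_on_iff_abs_summable_on_real[of f A] by simp
  then have s: "(\<lambda>x. \<bar>f x\<bar>) summable_on A" by simp
  have eq: "ennreal (\<Sum>\<^sub>\<infinity>x\<in>A. \<bar>f x\<bar>) = (\<Sum>\<^sub>\<infinity>x\<in>A. ennreal \<bar>f x\<bar>)"
    by (rule ennreal_infsum[OF s]) simp
  have "ennreal (\<Sum>\<^sub>\<infinity>x\<in>A. \<bar>f x\<bar>) < \<infinity>" by simp
  from this[unfolded eq] show ?thesis .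
qed

lemma nn_integral_infsum:
  fixes f :: "'i \<Rightarrow> 'a \<Rightarrow> ennreal"
  assumes A: "countable A" and meas: "\<And>i. i \<in> A \<Longrightarrow> f i \<in> borel_measurable M"
  shows "(\<integral>\<^sup>+x. (\<Sum>\<^sub>\<infinity>i\<in>A. f i x) \<partial>M) = (\<Sum>\<^sub>\<infinity>i\<in>A. \<integral>\<^sup>+x. f i x \<partial>M)"
proof -
  have "(\<integral>\<^sup>+x. (\<Sum>\<^sub>\<infinity>i\<in>A. f i x) \<partial>M) = (\<integral>\<^sup>+x. (\<Sum>n. ext A (\<lambda>i. f i x) n) \<partial>M)"
    by (simp add: ext_ennreal_suminf[OF A])
  also have "\<dots> = (\<Sum>n. \<integral>\<^sup>+x. ext A (\<lambda>i. f i x) n \<partial>M)"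
  proof (rule nn_integral_suminf)
    fix n
    show "(\<lambda>x. ext A (\<lambda>i. f i x) n) \<in> borel_measurable M"
    proof (cases "n \<in> to_nat_on A ` A")
      case True
      then obtain i where i: "i \<in> A" "n = to_nat_on A i" by blast
      then have "from_nat_into A n = i" using A by simp
      then show ?thesis using True meas[OF i(1)] by (simp add: ext_def)
    next
      case False then show ?thesis by (simp add: ext_def)
    qed
  qed
  also have "\<dots> = (\<Sum>n. ext A (\<lambda>i. \<integral>\<^sup>+x. f i x \<partial>M) n)"
  proof (rule suminf_cong)
    fix n show "(\<integral>\<^sup>+x. ext A (\<lambda>i. f i x) n \<partial>M) = ext A (\<lambda>i. \<integral>\<^sup>+x. f i x \<partial>M) n"
      by (cases "n \<in> to_nat_on A ` A") (simp_all add: ext_def)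
  qed
  also have "\<dots> = (\<Sum>\<^sub>\<infinity>i\<in>A. \<integral>\<^sup>+x. f i x \<partial>M)"
    by (simp add: ext_ennreal_suminf[OF A])
  finally show ?thesis .
qed

lemma infsum_diff_real:
  fixes f g :: "'a \<Rightarrow> real"
  assumes "f summable_on A" "g summable_on A"
  shows "infsum (\<lambda>x. f x - g x) A = infsum f A - infsum g A"
proof -
  have "(\<lambda>x. - g x) summable_on A" using assms(2) by (simp add: summable_on_uminus)
  then have "infsum (\<lambda>x. f x + - g x) A = infsum f A + infsum (\<lambda>x. - g x) A"
    by (rule infsum_add[OF assms(1)])
  then show ?thesis by (simp add: infsum_uminus)
qed




locale prob = latt +
  fixes a :: "real set \<Rightarrow> real"
  assumes AEfin: "AE x in lebesgue. abs_balayage L a x < \<infinity>"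
    and locint: "locally_integrable_nn (abs_balayage L a)"
begin

definition fI :: "real set \<Rightarrow> real \<Rightarrow> real" where
  "fI I x = a I / measure lebesgue I * indicator I x"

definition v :: "real set \<Rightarrow> real set \<Rightarrow> real" where
  "v A I = a I * measure lebesgue (I \<inter> A) / measure lebesgue I"

abbreviation "g \<equiv> balayage L a"
abbreviation "ab \<equiv> abs_balayage L a"

lemma ab_meas[measurable]: "ab \<in> borel_measurable lebesgue"
  using locint unfolding locally_integrable_nn_def by blast

lemma ab_eq: "ab x = (\<Sum>\<^sub>\<infinity>I\<in>lat L. ennreal \<bar>fI I x\<bar>)"
  unfolding abs_balayage_def
proof (rule infsum_cong)
  fix I assume I: "I \<in> lat L"
  have p: "0 < measure lebesgue I" using lat_pos[OF I] .
  show "ennreal (\<bar>a I\<bar> / measure lebesgue I * indicator I x) = ennreal \<bar>fI I x\<bar>"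
    unfolding fI_def using p by (simp add: abs_mult indicator_def)
qed

lemma g_eq: "g x = (\<Sum>\<^sub>\<infinity>I\<in>lat L. fI I x)"
  unfolding balayage_def fI_def by simp

lemma fI_meas[measurable]: "I \<in> lat L \<Longrightarrow> fI I \<in> borel_measurable lebesgue"
  unfolding fI_def using lat_sets[of I] by simp

lemma ext_meas:
  "(\<lambda>x. ext (lat L) (\<lambda>I. fI I x) n) \<in> borel_measurable lebesgue"
proof (cases "n \<in> to_nat_on (lat L) ` lat L")
  case True
  then obtain i where i: "i \<in> lat L" "n = to_nat_on (lat L) i" by blast
  then have "from_nat_into (lat L) n = i" using countable_lat by simp
  then show ?thesis using True fI_meas[OF i(1)] by (simp add: ext_def)
next
  case False then show ?thesis by (simp add: ext_def)
qed

lemma g_formula: "g x = (if ab x < \<infinity> then suminf (ext (lat L) (\<lambda>I. fI I x)) else 0)"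
proof (cases "ab x < \<infinity>")
  case True
  then have fin: "(\<Sum>\<^sub>\<infinity>I\<in>lat L. ennreal \<bar>fI I x\<bar>) < \<infinity>" using ab_eq by simp
  have s: "summable (\<lambda>n. \<bar>ext (lat L) (\<lambda>I. fI I x) n\<bar>)"
    using ennreal_fin_summable(1)[OF countable_lat fin] .
  show ?thesis using True ext_real_infsum(2)[OF countable_lat s] g_eq by simp
next
  case False
  have "\<not> (\<lambda>I. fI I x) summable_on lat L"
  proof
    assume "(\<lambda>I. fI I x) summable_on lat L"
    then have "(\<Sum>\<^sub>\<infinity>I\<in>lat L. ennreal \<bar>fI I x\<bar>) < \<infinity>" by (rule summable_ennreal_fin)
    then show False using False ab_eq by simp
  qed
  then show ?thesis using False g_eq by (simp add: infsum_not_exists)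
qed

lemma g_meas[measurable]: "g \<in> borel_measurable lebesgue"
proof -
  have m: "(\<lambda>x. suminf (\<lambda>n. ext (lat L) (\<lambda>I. fI I x) n)) \<in> borel_measurable lebesgue"
    by (rule borel_measurable_suminf) (rule ext_meas)
  have "(\<lambda>x. if ab x < \<infinity> then suminf (ext (lat L) (\<lambda>I. fI I x)) else 0) \<in> borel_measurable lebesgue"
    using m by measurable
  then show ?thesis by (subst g_formula[abs_def]) simp
qed

end



context prob begin

lemma fI_ind: "indicator A x * fI I x = a I / measure lebesgue I * indicator (I \<inter> A) x"
  unfolding fI_def indicator_def by auto

lemma int_fI:
  assumes I: "I \<in> lat L" and A: "A \<in> sets lebesgue"
  shows "integrable lebesgue (\<lambda>x. indicator A x * fI I x)"
    "(\<integral>x. indicator A x * fI I x \<partial>lebesgue) = v A I"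
    "(\<integral>\<^sup>+x. ennreal \<bar>indicator A x * fI I x\<bar> \<partial>lebesgue) = ennreal \<bar>v A I\<bar>"
proof -
  have IA: "I \<inter> A \<in> sets lebesgue" using lat_sets[OF I] A by simp
  have fIA: "emeasure lebesgue (I \<inter> A) < \<infinity>"
    using lat_fin[OF I] emeasure_mono[of "I \<inter> A" I lebesgue] lat_sets[OF I] by (meson Int_lower1 le_less_trans)
  have p: "0 < measure lebesgue I" using lat_pos[OF I] .
  have ii: "integrable lebesgue (indicator (I \<inter> A) :: real \<Rightarrow> real)" using IA fIA by simp
  show "integrable lebesgue (\<lambda>x. indicator A x * fI I x)"
    unfolding fI_ind using ii by simp
  have mIA: "measure lebesgue (I \<inter> A) = measure lebesgue (I \<inter> A \<inter> space lebesgue)" by simp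
  show "(\<integral>x. indicator A x * fI I x \<partial>lebesgue) = v A I"
    unfolding fI_ind v_def using ii by simp
  have "(\<integral>\<^sup>+x. ennreal \<bar>indicator A x * fI I x\<bar> \<partial>lebesgue)
      = (\<integral>\<^sup>+x. ennreal (\<bar>a I\<bar> / measure lebesgue I) * indicator (I \<inter> A) x \<partial>lebesgue)"
    unfolding fI_ind using p by (intro nn_integral_cong) (simp add: abs_mult indicator_def)
  also have "\<dots> = ennreal (\<bar>a I\<bar> / measure lebesgue I) * emeasure lebesgue (I \<inter> A)"
    by (rule nn_integral_cmult_indicator[OF IA])
  also have "\<dots> = ennreal (\<bar>a I\<bar> / measure lebesgue I) * ennreal (measure lebesgue (I \<inter> A))"
    using fIA by (simp add: emeasure_eq_ennreal_measure)
  also have "\<dots> = ennreal \<bar>v A I\<bar>"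
    unfolding v_def using p by (simp add: ennreal_mult'[symmetric] abs_mult)
  finally show "(\<integral>\<^sup>+x. ennreal \<bar>indicator A x * fI I x\<bar> \<partial>lebesgue) = ennreal \<bar>v A I\<bar>" .
qed

end



context prob begin

lemma BL:
  assumes A: "A \<in> sets lebesgue" and fin: "(\<integral>\<^sup>+x\<in>A. ab x \<partial>lebesgue) < \<infinity>"
  shows "set_integrable lebesgue A g" "(v A) summable_on lat L" "(\<lambda>I. \<bar>v A I\<bar>) summable_on lat L"
        "(LINT x:A|lebesgue. g x) = (\<Sum>\<^sub>\<infinity>I\<in>lat L. v A I)"
proof -
  let ?S = "lat L"
  note cS = countable_lat
  define h where "h n x = indicator A x * ext ?S (\<lambda>I. fI I x) n" for n x
  have h_cases: "h n = (if n \<in> to_nat_on ?S ` ?S then (\<lambda>x. indicator A x * fI (from_nat_into ?S n) x) else (\<lambda>x. 0))" for n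
    unfolding h_def ext_def by (cases "n \<in> to_nat_on ?S ` ?S") auto
  have props: "integrable lebesgue (h n) \<and> integral\<^sup>L lebesgue (h n) = ext ?S (v A) n \<and>
      (\<integral>\<^sup>+x. ennreal \<bar>h n x\<bar> \<partial>lebesgue) = ennreal \<bar>ext ?S (v A) n\<bar>" for n
  proof (cases "n \<in> to_nat_on ?S ` ?S")
    case True
    then obtain i where i: "i \<in> ?S" "n = to_nat_on ?S i" by blast
    then have fi: "from_nat_into ?S n = i" using cS by simp
    have hn: "h n = (\<lambda>x. indicator A x * fI i x)" using h_cases[of n] True fi by simp
    have en: "ext ?S (v A) n = v A i" using True fi by (simp add: ext_def)
    show ?thesis unfolding hn en using int_fI[OF i(1) A] by simp
  next
    case False
    then have hn: "h n = (\<lambda>x. 0)" using h_cases[of n] by simp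
    have en: "ext ?S (v A) n = 0" using False by (simp add: ext_def)
    show ?thesis unfolding hn en by simp
  qed
  have h_int: "integrable lebesgue (h n)" for n using props by blast
  have h_I: "integral\<^sup>L lebesgue (h n) = ext ?S (v A) n" for n using props by blast
  have h_N: "(\<integral>\<^sup>+x. ennreal \<bar>h n x\<bar> \<partial>lebesgue) = ennreal \<bar>ext ?S (v A) n\<bar>" for n using props by blast
  have h_meas[measurable]: "h n \<in> borel_measurable lebesgue" for n using h_int by blast
  have h_norm: "(\<integral>x. norm (h n x) \<partial>lebesgue) = \<bar>ext ?S (v A) n\<bar>" for n
  proof -
    have "ennreal (\<integral>x. norm (h n x) \<partial>lebesgue) = (\<integral>\<^sup>+x. norm (h n x) \<partial>lebesgue)"
      by (rule nn_integral_eq_integral[symmetric]) (use h_int in auto)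
    also have "\<dots> = ennreal \<bar>ext ?S (v A) n\<bar>" using h_N by simp
    finally show ?thesis by (simp add: integral_nonneg_AE)
  qed
  have abx: "(\<Sum>n. ennreal \<bar>ext ?S (\<lambda>I. fI I x) n\<bar>) = ab x" for x
    by (simp add: ab_eq ext_ennreal_suminf[OF cS] ext_abs ext_ennreal)
  have sum_h: "(\<Sum>n. ennreal \<bar>h n x\<bar>) = ab x * indicator A x" for x
  proof (cases "x \<in> A")
    case True then show ?thesis using abx[of x] by (simp add: h_def)
  next
    case False then show ?thesis by (simp add: h_def)
  qed
  have "(\<Sum>n. ennreal \<bar>ext ?S (v A) n\<bar>) = (\<Sum>n. \<integral>\<^sup>+x. ennreal \<bar>h n x\<bar> \<partial>lebesgue)"
    using h_N by simp
  also have "\<dots> = (\<integral>\<^sup>+x. (\<Sum>n. ennreal \<bar>h n x\<bar>) \<partial>lebesgue)"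
    by (rule nn_integral_suminf[symmetric]) simp
  also have "\<dots> = (\<integral>\<^sup>+x\<in>A. ab x \<partial>lebesgue)" using sum_h by simp
  finally have "(\<Sum>n. ennreal \<bar>ext ?S (v A) n\<bar>) < \<infinity>" using fin by simp
  then have s_v: "summable (\<lambda>n. \<bar>ext ?S (v A) n\<bar>)"
    by (intro summable_suminf_not_top) auto
  have s_norm: "summable (\<lambda>n. \<integral>x. norm (h n x) \<partial>lebesgue)" using s_v h_norm by simp
  have AE_s: "AE x in lebesgue. summable (\<lambda>n. norm (h n x))"
    using AEfin
  proof eventually_elim
    fix x assume "ab x < \<infinity>"
    then have fin: "(\<Sum>\<^sub>\<infinity>I\<in>lat L. ennreal \<bar>fI I x\<bar>) < \<infinity>" using ab_eq by simp
    have s: "summable (\<lambda>n. \<bar>ext ?S (\<lambda>I. fI I x) n\<bar>)" using ennreal_fin_summable(1)[OF cS fin] .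
    have "summable (\<lambda>n. indicator A x * \<bar>ext ?S (\<lambda>I. fI I x) n\<bar>)" using summable_mult[OF s] by blast
    then show "summable (\<lambda>n. norm (h n x))" by (simp add: h_def abs_mult)
  qed
  note IS = integrable_suminf[OF h_int AE_s s_norm] and IQ = integral_suminf[OF h_int AE_s s_norm]
  have sum_eq: "(\<Sum>n. h n x) = indicator A x * g x" if "ab x < \<infinity>" for x
  proof (cases "x \<in> A")
    case True then show ?thesis using that g_formula[of x] by (simp add: h_def)
  next
    case False then show ?thesis by (simp add: h_def)
  qed
  have AE_eq: "AE x in lebesgue. (\<Sum>n. h n x) = indicator A x *\<^sub>R g x"
    using AEfin by eventually_elim (simp add: sum_eq)
  have m2: "(\<lambda>x. indicator A x *\<^sub>R g x) \<in> borel_measurable lebesgue" using A by measurable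
  have m1: "(\<lambda>x. \<Sum>n. h n x) \<in> borel_measurable lebesgue" by measurable
  show "set_integrable lebesgue A g"
    unfolding set_integrable_def by (rule integrable_cong_AE_imp[OF IS m2 AE_eq])
  have "(LINT x:A|lebesgue. g x) = (\<integral>x. (\<Sum>n. h n x) \<partial>lebesgue)"
    unfolding set_lebesgue_integral_def by (rule integral_cong_AE[OF m2 m1]) (use AE_eq in \<open>auto elim: eventually_mono\<close>)
  also have "\<dots> = (\<Sum>n. ext ?S (v A) n)" using IQ h_I by simp
  also have "\<dots> = (\<Sum>\<^sub>\<infinity>I\<in>lat L. v A I)" using ext_real_infsum(2)[OF cS s_v] by simp
  finally show "(LINT x:A|lebesgue. g x) = (\<Sum>\<^sub>\<infinity>I\<in>lat L. v A I)" .
  show "(v A) summable_on lat L" using ext_real_infsum(1)[OF cS s_v] .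
  have s_v2: "summable (\<lambda>n. \<bar>ext ?S (\<lambda>I. \<bar>v A I\<bar>) n\<bar>)" using s_v by (simp add: ext_abs)
  show "(\<lambda>I. \<bar>v A I\<bar>) summable_on lat L" using ext_real_infsum(1)[OF cS s_v2] .
qed

end



definition Sub :: "(int \<Rightarrow> real set set) \<Rightarrow> real set \<Rightarrow> real set set" where
  "Sub L I = {J \<in> lat L. J \<subseteq> I}"
definition Strict :: "(int \<Rightarrow> real set set) \<Rightarrow> real set \<Rightarrow> real set set" where
  "Strict L I = {J \<in> lat L. J \<subseteq> I \<and> J \<noteq> I}"

locale probC = prob +
  fixes C :: real
  assumes cb: "carleson_bound L (\<lambda>I. \<bar>a I\<bar>) C"
begin

definition c :: "real set \<Rightarrow> real" where "c I = (\<Sum>\<^sub>\<infinity>J\<in>Sub L I. a J)"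
definition d :: "real set \<Rightarrow> real" where "d I = (\<Sum>\<^sub>\<infinity>J\<in>Strict L I. a J)"

lemma Cpos: "C > 0" using cb unfolding carleson_bound_def by blast

lemma cb_lat: "I \<in> lat L \<Longrightarrow> (\<Sum>\<^sub>\<infinity>J\<in>Sub L I. ennreal \<bar>a J\<bar>) \<le> ennreal (C * measure lebesgue I)"
  using cb unfolding carleson_bound_def Sub_def by simp

lemma Sub_countable: "countable (Sub L I)"
  unfolding Sub_def using countable_lat by (rule countable_subset[rotated]) blast

lemma car1: assumes I: "I \<in> lat L"
  shows "(\<lambda>J. \<bar>a J\<bar>) summable_on Sub L I" "a summable_on Sub L I"
    "(\<Sum>\<^sub>\<infinity>J\<in>Sub L I. \<bar>a J\<bar>) \<le> C * measure lebesgue I"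
proof -
  have fin: "(\<Sum>\<^sub>\<infinity>J\<in>Sub L I. ennreal \<bar>a J\<bar>) < \<infinity>"
    using cb_lat[OF I] by (simp add: le_less_trans)
  note F = ennreal_fin_summable[OF Sub_countable fin]
  show "(\<lambda>J. \<bar>a J\<bar>) summable_on Sub L I" "a summable_on Sub L I" using F by auto
  have "ennreal (\<Sum>\<^sub>\<infinity>J\<in>Sub L I. \<bar>a J\<bar>) \<le> ennreal (C * measure lebesgue I)"
    using F(4) cb_lat[OF I] by simp
  then show "(\<Sum>\<^sub>\<infinity>J\<in>Sub L I. \<bar>a J\<bar>) \<le> C * measure lebesgue I"
    using Cpos lat_pos[OF I] by (simp add: ennreal_le_iff)
qed

lemma car2: assumes I: "I \<in> lat L" and B: "B \<subseteq> Sub L I"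
  shows "(\<lambda>J. \<bar>a J\<bar>) summable_on B" "a summable_on B"
    "(\<Sum>\<^sub>\<infinity>J\<in>B. \<bar>a J\<bar>) \<le> C * measure lebesgue I"
    "\<bar>\<Sum>\<^sub>\<infinity>J\<in>B. a J\<bar> \<le> C * measure lebesgue I"
proof -
  note F = car1[OF I]
  show s1: "(\<lambda>J. \<bar>a J\<bar>) summable_on B" using summable_on_subset_banach[OF F(1) B] .
  show "a summable_on B" using summable_on_subset_banach[OF F(2) B] .
  have "(\<Sum>\<^sub>\<infinity>J\<in>B. \<bar>a J\<bar>) \<le> (\<Sum>\<^sub>\<infinity>J\<in>Sub L I. \<bar>a J\<bar>)"
    by (rule infsum_mono2[OF s1 F(1) B]) simp
  then show s3: "(\<Sum>\<^sub>\<infinity>J\<in>B. \<bar>a J\<bar>) \<le> C * measure lebesgue I" using F(3) by linarith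
  have "norm (\<Sum>\<^sub>\<infinity>J\<in>B. a J) \<le> (\<Sum>\<^sub>\<infinity>J\<in>B. norm (a J))"
    by (rule norm_infsum_bound) (use s1 in simp)
  then show "\<bar>\<Sum>\<^sub>\<infinity>J\<in>B. a J\<bar> \<le> C * measure lebesgue I" using s3 by simp
qed

lemma Strict_sub: "Strict L I \<subseteq> Sub L I" unfolding Strict_def Sub_def by blast

lemma c_bound: "I \<in> lat L \<Longrightarrow> \<bar>c I\<bar> \<le> C * measure lebesgue I"
  unfolding c_def using car2(4)[of I "Sub L I"] by simp

lemma d_bound: "I \<in> lat L \<Longrightarrow> \<bar>d I\<bar> \<le> C * measure lebesgue I"
  unfolding d_def using car2(4)[OF _ Strict_sub] by simp

lemma lat_ab_fin: assumes I: "I \<in> lat L" shows "(\<integral>\<^sup>+x\<in>I. ab x \<partial>lebesgue) < \<infinity>"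
proof -
  obtain r where r: "I \<subseteq> cbox (-r) r" using bounded_subset_cbox_symmetric[OF lat_bounded[OF I]] by blast
  then have r': "I \<subseteq> {-r..r}" by simp
  have "(\<integral>\<^sup>+x\<in>I. ab x \<partial>lebesgue) \<le> (\<integral>\<^sup>+x\<in>{-r..r}. ab x \<partial>lebesgue)"
    by (rule nn_integral_mono) (use r' in \<open>auto simp: indicator_def\<close>)
  also have "\<dots> < \<infinity>" using locint unfolding locally_integrable_nn_def by blast
  finally show ?thesis .
qed

end



lemma infsum_div_real: "f summable_on A \<Longrightarrow> (\<Sum>\<^sub>\<infinity>x\<in>A. f x / (r::real)) = (\<Sum>\<^sub>\<infinity>x\<in>A. f x) / r"
  by (simp add: divide_inverse infsum_cmult_left)

lemma summable_div_real: "f summable_on A \<Longrightarrow> (\<lambda>x. f x / (r::real)) summable_on A"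
  by (simp add: divide_inverse summable_on_cmult_left)

lemma restrict_sum:
  fixes f :: "'a \<Rightarrow> real"
  assumes B: "B \<subseteq> T" and s: "f summable_on B"
  shows "(\<lambda>I. if I \<in> B then f I else 0) summable_on T"
    "(\<Sum>\<^sub>\<infinity>I\<in>T. if I \<in> B then f I else 0) = infsum f B"
proof -
  have "(f has_sum infsum f B) B" by (rule has_sum_infsum[OF s])
  moreover have "(f has_sum infsum f B) B \<longleftrightarrow> ((\<lambda>I. if I \<in> B then f I else 0) has_sum infsum f B) T"
    by (rule has_sum_cong_neutral) (use B in auto)
  ultimately have h: "((\<lambda>I. if I \<in> B then f I else 0) has_sum infsum f B) T" by blast
  then show "(\<lambda>I. if I \<in> B then f I else 0) summable_on T" by (auto simp: summable_on_def)
  show "(\<Sum>\<^sub>\<infinity>I\<in>T. if I \<in> B then f I else 0) = infsum f B" using h by (rule infsumI)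
qed

context probC begin

lemma v_sub: assumes "I \<in> lat L" "I \<subseteq> K" shows "v K I = a I"
proof -
  have "I \<inter> K = I" using assms(2) by blast
  then show ?thesis unfolding v_def using lat_pos[OF assms(1)] by simp
qed

lemma v_sup: assumes "I \<in> lat L" "K \<subseteq> I" shows "v K I = a I * measure lebesgue K / measure lebesgue I"
proof -
  have "I \<inter> K = K" using assms(2) by blast
  then show ?thesis unfolding v_def by simp
qed

lemma v_disj: "I \<inter> K = {} \<Longrightarrow> v K I = 0"
  unfolding v_def by simp

lemma avg_eq: assumes K: "K \<in> lat L"
  shows "avg K g = (\<Sum>\<^sub>\<infinity>I\<in>lat L. v K I) / measure lebesgue K" "(v K) summable_on lat L"
  using BL(2,4)[OF lat_sets[OF K] lat_ab_fin[OF K]] unfolding avg_def by auto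

lemma pw:
  assumes J: "J \<in> lat L" and K: "K \<in> child L J" and I: "I \<in> lat L"
  shows "v K I / measure lebesgue K - v J I / measure lebesgue J
     = (if I \<in> Sub L K then a I / measure lebesgue K else 0) - (if I \<in> Strict L J then a I / measure lebesgue J else 0)"
proof -
  have Kl: "K \<in> lat L" using child_lat[OF K] .
  have KJ: "K \<subseteq> J" using child_sub[OF K] by blast
  have KnJ: "K \<noteq> J" using child_neq[OF J K] .
  have pK: "0 < measure lebesgue K" using lat_pos[OF Kl] .
  have pJ: "0 < measure lebesgue J" using lat_pos[OF J] .
  have pI: "0 < measure lebesgue I" using lat_pos[OF I] .
  have Ine: "I \<noteq> {}" using lat_ne[OF I] .
  consider (a) "I \<inter> J = {}" | (b) "J \<subseteq> I" | (c) "I \<subseteq> J" "I \<noteq> J"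
    using lat_nest[OF I J] by blast
  then show ?thesis
  proof cases
    case a
    have IK: "I \<inter> K = {}" using a KJ by blast
    have n1: "I \<notin> Sub L K" using IK Ine unfolding Sub_def by blast
    have n2: "I \<notin> Strict L J" using a Ine unfolding Strict_def by blast
    show ?thesis using v_disj[OF IK] v_disj[OF a] n1 n2 by simp
  next
    case b
    have KI: "K \<subseteq> I" using b KJ by blast
    have n1: "I \<notin> Sub L K"
    proof
      assume "I \<in> Sub L K"
      then have "I \<subseteq> K" unfolding Sub_def by blast
      then have "J \<subseteq> K" using b by blast
      then show False using KJ KnJ by blast
    qed
    have n2: "I \<notin> Strict L J" using b unfolding Strict_def by blast
    have e1: "v K I / measure lebesgue K = a I / measure lebesgue I"
      using v_sup[OF I KI] pK by simp
    have e2: "v J I / measure lebesgue J = a I / measure lebesgue I"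
      using v_sup[OF I b] pJ by simp
    show ?thesis using e1 e2 n1 n2 by simp
  next
    case c
    have y2: "I \<in> Strict L J" using c I unfolding Strict_def by blast
    have e2: "v J I = a I" using v_sub[OF I c(1)] .
    obtain K' where K': "K' \<in> child L J" "I \<subseteq> K'" using below[OF J I c] by blast
    show ?thesis
    proof (cases "K' = K")
      case True
      then have IK: "I \<subseteq> K" using K' by simp
      have y1: "I \<in> Sub L K" using IK I unfolding Sub_def by blast
      show ?thesis using v_sub[OF I IK] e2 y1 y2 by simp
    next
      case False
      have dj: "K \<inter> K' = {}" using child_disj[OF K K'(1)] False by blast
      have IK: "I \<inter> K = {}" using dj K'(2) by blast
      have n1: "I \<notin> Sub L K" using IK Ine unfolding Sub_def by blast
      show ?thesis using v_disj[OF IK] e2 n1 y2 by simp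
    qed
  qed
qed

lemma diff_avg:
  assumes J: "J \<in> lat L" and K: "K \<in> child L J"
  shows "avg K g - avg J g = c K / measure lebesgue K - d J / measure lebesgue J"
proof -
  have Kl: "K \<in> lat L" using child_lat[OF K] .
  let ?mK = "measure lebesgue K" and ?mJ = "measure lebesgue J"
  note aK = avg_eq[OF Kl] and aJ = avg_eq[OF J]
  have s1: "(\<lambda>I. v K I / ?mK) summable_on lat L" using summable_div_real[OF aK(2)] .
  have s2: "(\<lambda>I. v J I / ?mJ) summable_on lat L" using summable_div_real[OF aJ(2)] .
  have SubK: "Sub L K \<subseteq> lat L" unfolding Sub_def by blast
  have StJ: "Strict L J \<subseteq> lat L" unfolding Strict_def by blast
  have sa1: "(\<lambda>I. a I / ?mK) summable_on Sub L K" using summable_div_real[OF car1(2)[OF Kl]] .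
  have sa2: "(\<lambda>I. a I / ?mJ) summable_on Strict L J"
    using summable_div_real[OF car2(2)[OF J Strict_sub]] .
  note R1 = restrict_sum[OF SubK sa1] and R2 = restrict_sum[OF StJ sa2]
  have "avg K g - avg J g = (\<Sum>\<^sub>\<infinity>I\<in>lat L. v K I / ?mK) - (\<Sum>\<^sub>\<infinity>I\<in>lat L. v J I / ?mJ)"
    using aK(1) aJ(1) infsum_div_real[OF aK(2)] infsum_div_real[OF aJ(2)] by simp
  also have "\<dots> = (\<Sum>\<^sub>\<infinity>I\<in>lat L. v K I / ?mK - v J I / ?mJ)"
    by (rule infsum_diff_real[OF s1 s2, symmetric])
  also have "\<dots> = (\<Sum>\<^sub>\<infinity>I\<in>lat L. (if I \<in> Sub L K then a I / ?mK else 0) - (if I \<in> Strict L J then a I / ?mJ else 0))"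
    by (rule infsum_cong) (rule pw[OF J K])
  also have "\<dots> = (\<Sum>\<^sub>\<infinity>I\<in>lat L. if I \<in> Sub L K then a I / ?mK else 0) - (\<Sum>\<^sub>\<infinity>I\<in>lat L. if I \<in> Strict L J then a I / ?mJ else 0)"
    by (rule infsum_diff_real[OF R1(1) R2(1)])
  also have "\<dots> = (\<Sum>\<^sub>\<infinity>I\<in>Sub L K. a I / ?mK) - (\<Sum>\<^sub>\<infinity>I\<in>Strict L J. a I / ?mJ)"
    using R1(2) R2(2) by simp
  also have "\<dots> = c K / ?mK - d J / ?mJ"
    unfolding c_def d_def using infsum_div_real[OF car1(2)[OF Kl]] infsum_div_real[OF car2(2)[OF J Strict_sub]] by simp
  finally show ?thesis .
qed

end



lemma sum_ind:
  fixes f :: "real set \<Rightarrow> real"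
  assumes "finite F" "K0 \<in> F" "x \<in> K0" "\<And>K. K \<in> F \<Longrightarrow> K \<noteq> K0 \<Longrightarrow> x \<notin> K"
  shows "(\<Sum>K\<in>F. f K * indicator K x) = f K0" "(\<Sum>K\<in>F. indicator K x * f K) = f K0"
proof -
  have "(\<Sum>K\<in>F. f K * indicator K x) = f K0 * indicator K0 x + (\<Sum>K\<in>F - {K0}. f K * indicator K x)"
    by (rule sum.remove[OF assms(1,2)])
  also have "(\<Sum>K\<in>F - {K0}. f K * indicator K x) = 0"
    by (rule sum.neutral) (use assms(4) in auto)
  finally show "(\<Sum>K\<in>F. f K * indicator K x) = f K0" using assms(3) by simp
  then show "(\<Sum>K\<in>F. indicator K x * f K) = f K0" by (simp add: mult.commute)
qed

context probC begin

definition u :: "real set \<Rightarrow> real set \<Rightarrow> real" where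
  "u J K = c K / measure lebesgue K - d J / measure lebesgue J"

lemma child_point:
  assumes J: "J \<in> lat L" and x: "x \<in> J"
  obtains K0 where "K0 \<in> child L J" "x \<in> K0" "\<And>K. K \<in> child L J \<Longrightarrow> K \<noteq> K0 \<Longrightarrow> x \<notin> K"
proof -
  have "x \<in> \<Union>(child L J)" using child_Un[OF J] x by simp
  then obtain K0 where K0: "K0 \<in> child L J" "x \<in> K0" by blast
  have "x \<notin> K" if "K \<in> child L J" "K \<noteq> K0" for K
    using child_disj[OF that(1) K0(1)] that(2) K0(2) by blast
  then show ?thesis using that K0 by blast
qed

lemma out_child: "J \<in> lat L \<Longrightarrow> x \<notin> J \<Longrightarrow> K \<in> child L J \<Longrightarrow> indicator K x = (0::real)"
  using child_sub by (auto simp: indicator_def)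

lemma Delta_formula: assumes J: "J \<in> lat L"
  shows "Delta L J g x = (\<Sum>K\<in>child L J. indicator K x * u J K)"
proof (cases "x \<in> J")
  case True
  obtain K0 where K0: "K0 \<in> child L J" "x \<in> K0" "\<And>K. K \<in> child L J \<Longrightarrow> K \<noteq> K0 \<Longrightarrow> x \<notin> K"
    using child_point[OF J True] by blast
  note F = child_fin[OF J]
  have "Delta L J g x = - avg J g + avg K0 g"
    unfolding Delta_def E_def using True sum_ind(1)[OF F K0, of "\<lambda>K. avg K g"] by simp
  also have "\<dots> = u J K0" unfolding u_def using diff_avg[OF J K0(1)] by simp
  also have "\<dots> = (\<Sum>K\<in>child L J. indicator K x * u J K)" using sum_ind(2)[OF F K0, of "u J"] by simp
  finally show ?thesis .
next
  case False
  have "Delta L J g x = 0" unfolding Delta_def E_def using False out_child[OF J False] by simp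
  moreover have "(\<Sum>K\<in>child L J. indicator K x * u J K) = 0" using out_child[OF J False] by simp
  ultimately show ?thesis by simp
qed

lemma u_bound: assumes J: "J \<in> lat L" and K: "K \<in> child L J" shows "\<bar>u J K\<bar> \<le> 2 * C"
proof -
  have Kl: "K \<in> lat L" using child_lat[OF K] .
  have pK: "0 < measure lebesgue K" using lat_pos[OF Kl] .
  have pJ: "0 < measure lebesgue J" using lat_pos[OF J] .
  have 1: "\<bar>c K / measure lebesgue K\<bar> \<le> C" using c_bound[OF Kl] pK by (simp add: divide_le_eq)
  have 2: "\<bar>d J / measure lebesgue J\<bar> \<le> C" using d_bound[OF J] pJ by (simp add: divide_le_eq)
  show ?thesis unfolding u_def using 1 2 by linarith
qed

lemma Delta_bound: assumes J: "J \<in> lat L" shows "\<bar>Delta L J g x\<bar> \<le> 2 * C"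
proof (cases "x \<in> J")
  case True
  obtain K0 where K0: "K0 \<in> child L J" "x \<in> K0" "\<And>K. K \<in> child L J \<Longrightarrow> K \<noteq> K0 \<Longrightarrow> x \<notin> K"
    using child_point[OF J True] by blast
  have "Delta L J g x = u J K0" using Delta_formula[OF J] sum_ind(2)[OF child_fin[OF J] K0, of "u J"] by simp
  then show ?thesis using u_bound[OF J K0(1)] by simp
next
  case False
  have "Delta L J g x = 0" using Delta_formula[OF J] out_child[OF J False] by simp
  then show ?thesis using Cpos by simp
qed

lemma Linf_bound: assumes J: "J \<in> lat L" shows "Linf_norm (Delta L J g) \<le> ennreal (2 * C)"
  unfolding Linf_norm_def
proof (rule Inf_lower)
  show "ennreal (2 * C) \<in> {c. AE x in lebesgue. ennreal \<bar>Delta L J g x\<bar> \<le> c}"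
    using Delta_bound[OF J] by (simp add: ennreal_leI)
qed

lemma C2_bound: "BMO_C2 L g \<le> ennreal (2 * C)"
  unfolding BMO_C2_def by (rule SUP_least) (rule Linf_bound)

end



context probC begin

lemma Sub_disj: assumes "K \<in> child L J" "K' \<in> child L J" "K \<noteq> K'" shows "Sub L K \<inter> Sub L K' = {}"
proof (rule ccontr)
  assume "Sub L K \<inter> Sub L K' \<noteq> {}"
  then obtain I where I: "I \<in> lat L" "I \<subseteq> K" "I \<subseteq> K'" unfolding Sub_def by blast
  have "I \<noteq> {}" using lat_ne[OF I(1)] .
  then have "K \<inter> K' \<noteq> {}" using I by blast
  then show False using child_disj[OF assms(1,2)] assms(3) by blast
qed

lemma Union_Sub: assumes J: "J \<in> lat L" shows "(\<Union>K\<in>child L J. Sub L K) = Strict L J"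
proof
  show "(\<Union>K\<in>child L J. Sub L K) \<subseteq> Strict L J"
  proof
    fix I assume "I \<in> (\<Union>K\<in>child L J. Sub L K)"
    then obtain K where K: "K \<in> child L J" "I \<in> Sub L K" by blast
    have IK: "I \<in> lat L" "I \<subseteq> K" using K(2) unfolding Sub_def by auto
    have KJ: "K \<subseteq> J" using child_sub[OF K(1)] by blast
    have "I \<noteq> J"
    proof
      assume "I = J"
      then have "K = J" using IK(2) KJ by blast
      then show False using child_neq[OF J K(1)] by blast
    qed
    then show "I \<in> Strict L J" using IK KJ unfolding Strict_def by blast
  qed
next
  show "Strict L J \<subseteq> (\<Union>K\<in>child L J. Sub L K)"
  proof
    fix I assume "I \<in> Strict L J"
    then have I: "I \<in> lat L" "I \<subseteq> J" "I \<noteq> J" unfolding Strict_def by auto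
    obtain K where "K \<in> child L J" "I \<subseteq> K" using below[OF J I] by blast
    then show "I \<in> (\<Union>K\<in>child L J. Sub L K)" using I(1) unfolding Sub_def by blast
  qed
qed

lemma sum_c: assumes J: "J \<in> lat L" shows "(\<Sum>K\<in>child L J. c K) = d J"
proof -
  have "(\<Sum>K\<in>child L J. infsum a (Sub L K)) = infsum a (\<Union>K\<in>child L J. Sub L K)"
  proof (rule sum_infsum)
    show "finite (child L J)" using child_fin[OF J] .
    show "\<And>K. K \<in> child L J \<Longrightarrow> a summable_on Sub L K" using car1(2) child_lat by blast
    show "\<And>K K'. K \<in> child L J \<Longrightarrow> K' \<in> child L J \<Longrightarrow> K \<noteq> K' \<Longrightarrow> Sub L K \<inter> Sub L K' = {}"
      using Sub_disj by blast
  qed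
  then show ?thesis unfolding c_def d_def Union_Sub[OF J] by simp
qed

lemma sum_m: assumes J: "J \<in> lat L" shows "(\<Sum>K\<in>child L J. measure lebesgue K) = measure lebesgue J"
proof -
  have "measure lebesgue (\<Union>(child L J)) = (\<Sum>K\<in>child L J. measure lebesgue K)"
  proof (rule measure_Union')
    show "finite (child L J)" using child_fin[OF J] .
    show "\<And>K. K \<in> child L J \<Longrightarrow> K \<in> fmeasurable lebesgue" using lat_lmeas child_lat by blast
    show "pairwise disjnt (child L J)"
      unfolding pairwise_def disjnt_def using child_disj by blast
  qed
  then show ?thesis using child_Un[OF J] by simp
qed

lemma c_split: assumes J: "J \<in> lat L" shows "c J = a J + d J"
proof -
  have "Sub L J = insert J (Strict L J)" using J unfolding Sub_def Strict_def by blast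
  moreover have "J \<notin> Strict L J" unfolding Strict_def by blast
  ultimately show ?thesis unfolding c_def d_def
    using infsum_insert[OF car2(2)[OF J Strict_sub]] by simp
qed

definition E :: "real set \<Rightarrow> real" where
  "E J = (\<Sum>K\<in>child L J. measure lebesgue K * (u J K)\<^sup>2)"

lemma E_nonneg: "E J \<ge> 0" unfolding E_def by (intro sum_nonneg) simp

lemma E_int: assumes J: "J \<in> lat L" and JI: "J \<subseteq> I0"
  shows "(\<integral>\<^sup>+x. ennreal ((Delta L J g x)\<^sup>2) * indicator I0 x \<partial>lebesgue) = ennreal (E J)"
proof -
  have pt: "ennreal ((Delta L J g x)\<^sup>2) * indicator I0 x = (\<Sum>K\<in>child L J. ennreal ((u J K)\<^sup>2) * indicator K x)" for x
  proof (cases "x \<in> J")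
    case True
    obtain K0 where K0: "K0 \<in> child L J" "x \<in> K0" "\<And>K. K \<in> child L J \<Longrightarrow> K \<noteq> K0 \<Longrightarrow> x \<notin> K"
      using child_point[OF J True] by blast
    have D: "Delta L J g x = u J K0" using Delta_formula[OF J] sum_ind(2)[OF child_fin[OF J] K0, of "u J"] by simp
    have "(\<Sum>K\<in>child L J. ennreal ((u J K)\<^sup>2) * indicator K x) = ennreal ((u J K0)\<^sup>2) * indicator K0 x + (\<Sum>K\<in>child L J - {K0}. ennreal ((u J K)\<^sup>2) * indicator K x)"
      by (rule sum.remove[OF child_fin[OF J] K0(1)])
    also have "(\<Sum>K\<in>child L J - {K0}. ennreal ((u J K)\<^sup>2) * indicator K x) = 0"
      by (rule sum.neutral) (use K0(3) in auto)
    finally show ?thesis using D K0(2) True JI by auto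
  next
    case False
    have "Delta L J g x = 0" using Delta_formula[OF J] out_child[OF J False] by simp
    moreover have "\<And>K. K \<in> child L J \<Longrightarrow> x \<notin> K" using False child_sub by blast
    ultimately show ?thesis by simp
  qed
  have "(\<integral>\<^sup>+x. ennreal ((Delta L J g x)\<^sup>2) * indicator I0 x \<partial>lebesgue)
      = (\<integral>\<^sup>+x. (\<Sum>K\<in>child L J. ennreal ((u J K)\<^sup>2) * indicator K x) \<partial>lebesgue)"
    using pt by simp
  also have "\<dots> = (\<Sum>K\<in>child L J. \<integral>\<^sup>+x. ennreal ((u J K)\<^sup>2) * indicator K x \<partial>lebesgue)"
    by (rule nn_integral_sum) (use lat_sets child_lat in auto)
  also have "\<dots> = (\<Sum>K\<in>child L J. ennreal ((u J K)\<^sup>2) * emeasure lebesgue K)"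
    by (rule sum.cong[OF refl]) (rule nn_integral_cmult_indicator, use lat_sets child_lat in blast)
  also have "\<dots> = (\<Sum>K\<in>child L J. ennreal (measure lebesgue K * (u J K)\<^sup>2))"
  proof (rule sum.cong[OF refl])
    fix K assume K: "K \<in> child L J"
    have "emeasure lebesgue K = ennreal (measure lebesgue K)"
      using lat_fin[OF child_lat[OF K]] by (simp add: emeasure_eq_ennreal_measure)
    then show "ennreal ((u J K)\<^sup>2) * emeasure lebesgue K = ennreal (measure lebesgue K * (u J K)\<^sup>2)"
      by (simp add: ennreal_mult'[symmetric] mult.commute)
  qed
  also have "\<dots> = ennreal (E J)" unfolding E_def by (rule sum_ennreal) simp
  finally show ?thesis .
qed

lemma E_eq: assumes J: "J \<in> lat L"
  shows "E J = (\<Sum>K\<in>child L J. (c K)\<^sup>2 / measure lebesgue K) - (d J)\<^sup>2 / measure lebesgue J"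
proof -
  let ?mJ = "measure lebesgue J"
  have pJ: "0 < ?mJ" using lat_pos[OF J] .
  have tm: "measure lebesgue K * (u J K)\<^sup>2 = (c K)\<^sup>2 / measure lebesgue K - 2 * (d J / ?mJ) * c K + (d J / ?mJ)\<^sup>2 * measure lebesgue K"
    if K: "K \<in> child L J" for K
  proof -
    have pK: "0 < measure lebesgue K" using lat_pos[OF child_lat[OF K]] .
    show ?thesis unfolding u_def using pK pJ by (simp add: power2_eq_square field_simps)
  qed
  have "E J = (\<Sum>K\<in>child L J. (c K)\<^sup>2 / measure lebesgue K - 2 * (d J / ?mJ) * c K + (d J / ?mJ)\<^sup>2 * measure lebesgue K)"
    unfolding E_def by (rule sum.cong[OF refl]) (rule tm)
  also have "\<dots> = (\<Sum>K\<in>child L J. (c K)\<^sup>2 / measure lebesgue K) - 2 * (d J / ?mJ) * (\<Sum>K\<in>child L J. c K) + (d J / ?mJ)\<^sup>2 * (\<Sum>K\<in>child L J. measure lebesgue K)"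
    by (simp add: sum.distrib sum_subtractf sum_distrib_left)
  also have "\<dots> = (\<Sum>K\<in>child L J. (c K)\<^sup>2 / measure lebesgue K) - 2 * (d J / ?mJ) * d J + (d J / ?mJ)\<^sup>2 * ?mJ"
    using sum_c[OF J] sum_m[OF J] by simp
  also have "\<dots> = (\<Sum>K\<in>child L J. (c K)\<^sup>2 / measure lebesgue K) - (d J)\<^sup>2 / ?mJ"
    using pJ by (simp add: power2_eq_square field_simps)
  finally show ?thesis .
qed

lemma E_le: assumes J: "J \<in> lat L"
  shows "E J \<le> (\<Sum>K\<in>child L J. (c K)\<^sup>2 / measure lebesgue K) - (c J)\<^sup>2 / measure lebesgue J + 2 * C * \<bar>a J\<bar>"
proof -
  let ?mJ = "measure lebesgue J"
  have pJ: "0 < ?mJ" using lat_pos[OF J] .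
  have e: "(c J)\<^sup>2 - (d J)\<^sup>2 = a J * (c J + d J)" using c_split[OF J] by (simp add: power2_eq_square algebra_simps)
  have "a J * (c J + d J) \<le> \<bar>a J * (c J + d J)\<bar>" by (rule abs_ge_self)
  also have "\<dots> = \<bar>a J\<bar> * \<bar>c J + d J\<bar>" by (rule abs_mult)
  also have "\<dots> \<le> \<bar>a J\<bar> * (\<bar>c J\<bar> + \<bar>d J\<bar>)"
    by (rule mult_left_mono[OF abs_triangle_ineq abs_ge_zero])
  also have "\<dots> \<le> \<bar>a J\<bar> * (2 * C * ?mJ)"
  proof (rule mult_left_mono[OF _ abs_ge_zero])
    show "\<bar>c J\<bar> + \<bar>d J\<bar> \<le> 2 * C * ?mJ" using c_bound[OF J] d_bound[OF J] by linarith
  qed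
  finally have "(c J)\<^sup>2 - (d J)\<^sup>2 \<le> 2 * C * \<bar>a J\<bar> * ?mJ" using e by (simp add: algebra_simps)
  then have "(c J)\<^sup>2 / ?mJ - (d J)\<^sup>2 / ?mJ \<le> 2 * C * \<bar>a J\<bar>"
    using pJ by (simp add: diff_divide_distrib[symmetric] divide_le_eq)
  then show ?thesis using E_eq[OF J] by simp
qed

end



locale tele = probC +
  fixes I0 :: "real set"
  assumes I0: "I0 \<in> lat L"
begin

abbreviation "n0 \<equiv> rk L I0"

definition G :: "nat \<Rightarrow> real set set" where
  "G m = {J \<in> L (n0 + int m). J \<subseteq> I0}"

definition R :: "nat \<Rightarrow> real set set" where
  "R m = {J \<in> G m. rk L J = n0 + int m}"

definition Q :: "real set \<Rightarrow> real" where
  "Q J = (c J)\<^sup>2 / measure lebesgue J"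

definition Phi :: "nat \<Rightarrow> real" where
  "Phi m = (\<Sum>J\<in>G m. Q J)"

definition nxt :: "int \<Rightarrow> real set \<Rightarrow> real set set" where
  "nxt n J = {K \<in> L (n + 1). K \<subseteq> J}"

lemma G_lat: "J \<in> G m \<Longrightarrow> J \<in> lat L" unfolding G_def lat_iff by blast

lemma G0: "G 0 = {I0}"
proof
  show "G 0 \<subseteq> {I0}"
  proof
    fix J assume "J \<in> G 0"
    then have J: "J \<in> L n0" "J \<subseteq> I0" unfolding G_def by auto
    have "J \<inter> I0 \<noteq> {}" using J(2) L_ne[OF J(1)] by blast
    then have "J = I0" using same_gen[OF J(1) rk_in[OF I0]] by blast
    then show "J \<in> {I0}" by simp
  qed
  show "{I0} \<subseteq> G 0" unfolding G_def using rk_in[OF I0] by simp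
qed

lemma nxt_eq: assumes J: "J \<in> L n"
  shows "nxt n J = (if rk L J = n then child L J else {J})"
proof (cases "rk L J = n")
  case True
  then show ?thesis unfolding nxt_def child_def by simp
next
  case False
  have ge: "n \<le> rk L J" using rk_ge[OF J] .
  then have gt: "n + 1 \<le> rk L J" using False by simp
  have Jn1: "J \<in> L (n + 1)" using interp[of n "n+1" "rk L J" J] gt J rk_prop(1)[OF J] by simp
  have "nxt n J = {J}"
  proof
    show "nxt n J \<subseteq> {J}"
    proof
      fix K assume "K \<in> nxt n J"
      then have K: "K \<in> L (n+1)" "K \<subseteq> J" unfolding nxt_def by auto
      have "K \<inter> J \<noteq> {}" using K(2) L_ne[OF K(1)] by blast
      then show "K \<in> {J}" using same_gen[OF K(1) Jn1] by simp
    qed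
    show "{J} \<subseteq> nxt n J" unfolding nxt_def using Jn1 by simp
  qed
  then show ?thesis using False by simp
qed

lemma nxt_fin: "J \<in> L n \<Longrightarrow> finite (nxt n J)"
  using nxt_eq child_fin lat_iff by (metis finite.emptyI finite_insert)

lemma idx: "n0 + int (Suc m) = n0 + int m + 1" by simp

lemma G_Suc: "G (Suc m) = (\<Union>J\<in>G m. nxt (n0 + int m) J)"
proof
  show "G (Suc m) \<subseteq> (\<Union>J\<in>G m. nxt (n0 + int m) J)"
  proof
    fix K assume "K \<in> G (Suc m)"
    then have K: "K \<in> L (n0 + int m + 1)" "K \<subseteq> I0" unfolding G_def idx by auto
    obtain J where J: "J \<in> L (n0 + int m)" "K \<subseteq> J" using parent1[OF K(1)] by blast
    have "J \<subseteq> I0 \<or> I0 \<inter> J = {}" using nest_or_disj[of n0 "n0 + int m" I0 J] rk_in[OF I0] J(1) by simp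
    moreover have "K \<noteq> {}" using L_ne[OF K(1)] .
    ultimately have "J \<subseteq> I0" using K(2) J(2) by blast
    then have "J \<in> G m" unfolding G_def using J(1) by simp
    moreover have "K \<in> nxt (n0 + int m) J" unfolding nxt_def using K(1) J(2) by simp
    ultimately show "K \<in> (\<Union>J\<in>G m. nxt (n0 + int m) J)" by blast
  qed
  show "(\<Union>J\<in>G m. nxt (n0 + int m) J) \<subseteq> G (Suc m)"
  proof
    fix K assume "K \<in> (\<Union>J\<in>G m. nxt (n0 + int m) J)"
    then obtain J where J: "J \<in> G m" "K \<in> nxt (n0 + int m) J" by blast
    then have "K \<in> L (n0 + int m + 1)" "K \<subseteq> I0" unfolding nxt_def G_def by auto
    then show "K \<in> G (Suc m)" unfolding G_def idx by simp
  qed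
qed

lemma G_fin: "finite (G m)"
proof (induction m)
  case 0 then show ?case using G0 by simp
next
  case (Suc m)
  have "finite (\<Union>J\<in>G m. nxt (n0 + int m) J)"
  proof (rule finite_UN_I[OF Suc.IH])
    fix J assume "J \<in> G m"
    then have "J \<in> L (n0 + int m)" unfolding G_def by simp
    then show "finite (nxt (n0 + int m) J)" by (rule nxt_fin)
  qed
  then show ?case using G_Suc by simp
qed

lemma nxt_disj: assumes "J \<in> L n" "J' \<in> L n" "J \<noteq> J'" shows "nxt n J \<inter> nxt n J' = {}"
proof (rule ccontr)
  assume "nxt n J \<inter> nxt n J' \<noteq> {}"
  then obtain K where K: "K \<in> L (n+1)" "K \<subseteq> J" "K \<subseteq> J'" unfolding nxt_def by blast
  have "K \<noteq> {}" using L_ne[OF K(1)] .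
  then have "J \<inter> J' \<noteq> {}" using K by blast
  then show False using same_gen[OF assms(1,2)] assms(3) by blast
qed

lemma Phi_Suc: "Phi (Suc m) - Phi m = (\<Sum>J\<in>R m. (\<Sum>K\<in>child L J. Q K) - Q J)"
proof -
  let ?n = "n0 + int m"
  have "Phi (Suc m) = (\<Sum>J\<in>G m. \<Sum>K\<in>nxt ?n J. Q K)"
    unfolding Phi_def G_Suc
  proof (rule sum.UNION_disjoint)
    show "finite (G m)" by (rule G_fin)
    show "\<forall>J\<in>G m. finite (nxt ?n J)" using nxt_fin unfolding G_def by blast
    show "\<forall>J\<in>G m. \<forall>J'\<in>G m. J \<noteq> J' \<longrightarrow> nxt ?n J \<inter> nxt ?n J' = {}"
      using nxt_disj unfolding G_def by blast
  qed
  then have "Phi (Suc m) - Phi m = (\<Sum>J\<in>G m. (\<Sum>K\<in>nxt ?n J. Q K) - Q J)"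
    unfolding Phi_def by (simp add: sum_subtractf)
  also have "\<dots> = (\<Sum>J\<in>G m. if rk L J = ?n then (\<Sum>K\<in>child L J. Q K) - Q J else 0)"
  proof (rule sum.cong[OF refl])
    fix J assume "J \<in> G m"
    then have J: "J \<in> L ?n" unfolding G_def by simp
    show "(\<Sum>K\<in>nxt ?n J. Q K) - Q J = (if rk L J = ?n then (\<Sum>K\<in>child L J. Q K) - Q J else 0)"
      using nxt_eq[OF J] by simp
  qed
  also have "\<dots> = (\<Sum>J\<in>R m. (\<Sum>K\<in>child L J. Q K) - Q J)"
    unfolding R_def by (rule sum.inter_filter[OF G_fin, symmetric])
  finally show ?thesis .
qed

lemma Phi_bound: "Phi m \<le> C\<^sup>2 * measure lebesgue I0"
proof -
  have q: "Q J \<le> C\<^sup>2 * measure lebesgue J" if J: "J \<in> lat L" for J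
  proof -
    have pJ: "0 < measure lebesgue J" using lat_pos[OF J] .
    have "(c J)\<^sup>2 \<le> (C * measure lebesgue J)\<^sup>2"
      using c_bound[OF J] by (metis abs_ge_zero power2_abs power_mono)
    then show ?thesis unfolding Q_def using pJ by (simp add: divide_le_eq power2_eq_square algebra_simps)
  qed
  have "Phi m \<le> (\<Sum>J\<in>G m. C\<^sup>2 * measure lebesgue J)"
    unfolding Phi_def by (rule sum_mono) (rule q[OF G_lat])
  also have "\<dots> = C\<^sup>2 * (\<Sum>J\<in>G m. measure lebesgue J)" by (simp add: sum_distrib_left)
  also have "(\<Sum>J\<in>G m. measure lebesgue J) = measure lebesgue (\<Union>(G m))"
  proof (rule measure_Union'[symmetric])
    show "finite (G m)" by (rule G_fin)
    show "\<And>J. J \<in> G m \<Longrightarrow> J \<in> fmeasurable lebesgue" using lat_lmeas G_lat by blast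
    show "pairwise disjnt (G m)" unfolding pairwise_def disjnt_def G_def using same_gen by blast
  qed
  also have "measure lebesgue (\<Union>(G m)) \<le> measure lebesgue I0"
  proof (rule measure_mono_fmeasurable)
    show "\<Union>(G m) \<subseteq> I0" unfolding G_def by blast
    show "\<Union>(G m) \<in> sets lebesgue"
      using G_fin lat_sets G_lat by (intro sets.finite_Union) auto
    show "I0 \<in> fmeasurable lebesgue" using lat_lmeas[OF I0] .
  qed
  finally show ?thesis by (simp add: mult_left_mono)
qed

lemma Phi_nonneg: "Phi m \<ge> 0"
  unfolding Phi_def Q_def by (intro sum_nonneg divide_nonneg_nonneg) simp_all

end



context probC begin

lemma Delta_meas[measurable]: assumes J: "J \<in> lat L" shows "Delta L J g \<in> borel_measurable lebesgue"
proof -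
  have "(\<lambda>x. \<Sum>K\<in>child L J. indicator K x * u J K) \<in> borel_measurable lebesgue"
  proof (rule borel_measurable_sum)
    fix K assume K: "K \<in> child L J"
    have [measurable]: "K \<in> sets lebesgue" using lat_sets[OF child_lat[OF K]] .
    show "(\<lambda>x. indicator K x * u J K) \<in> borel_measurable lebesgue" by measurable
  qed
  moreover have "Delta L J g = (\<lambda>x. \<Sum>K\<in>child L J. indicator K x * u J K)"
    by (rule ext) (rule Delta_formula[OF J])
  ultimately show ?thesis by simp
qed

end

context tele begin

lemma rk_ge_n0: assumes J: "J \<in> Sub L I0" shows "n0 \<le> rk L J"
proof (rule ccontr)
  assume "\<not> n0 \<le> rk L J"
  then have lt: "rk L J \<le> n0" by simp
  have Jl: "J \<in> lat L" "J \<subseteq> I0" using J unfolding Sub_def by auto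
  have "I0 \<subseteq> J \<or> J \<inter> I0 = {}" using nest_or_disj[OF lt rk_in[OF Jl(1)] rk_in[OF I0]] .
  moreover have "J \<noteq> {}" using lat_ne[OF Jl(1)] .
  ultimately have "J = I0" using Jl(2) by blast
  then show False using \<open>\<not> n0 \<le> rk L J\<close> by simp
qed

lemma in_R: assumes J: "J \<in> Sub L I0" shows "J \<in> R (nat (rk L J - n0))"
proof -
  have e: "n0 + int (nat (rk L J - n0)) = rk L J" using rk_ge_n0[OF J] by simp
  have Jl: "J \<in> lat L" "J \<subseteq> I0" using J unfolding Sub_def by auto
  show ?thesis unfolding R_def G_def e using rk_in[OF Jl(1)] Jl(2) by simp
qed

lemma R_disj: "m \<noteq> m' \<Longrightarrow> R m \<inter> R m' = {}" unfolding R_def by auto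
lemma R_sub_G: "R m \<subseteq> G m" unfolding R_def by auto
lemma R_fin: "finite (R m)" using finite_subset[OF R_sub_G G_fin] .
lemma R_Sub: "R m \<subseteq> Sub L I0" unfolding R_def G_def Sub_def lat_iff by blast

lemma fin_bound: assumes F: "finite F" "F \<subseteq> Sub L I0"
  shows "(\<Sum>J\<in>F. E J) \<le> 3 * C\<^sup>2 * measure lebesgue I0"
proof -
  let ?mu = "measure lebesgue I0"
  have "finite ((\<lambda>J. nat (rk L J - n0)) ` F)" using F(1) by simp
  then obtain M where M: "\<forall>k\<in>(\<lambda>J. nat (rk L J - n0)) ` F. k < M" using finite_nat_set_iff_bounded by blast
  define U where "U = (\<Union>m\<in>{..<M}. R m)"
  have FU: "F \<subseteq> U"
  proof
    fix J assume J: "J \<in> F"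
    then have "nat (rk L J - n0) \<in> {..<M}" using M by auto
    moreover have "J \<in> R (nat (rk L J - n0))" using in_R F(2) J by blast
    ultimately show "J \<in> U" unfolding U_def by blast
  qed
  have Ufin: "finite U" unfolding U_def using R_fin by simp
  have USub: "U \<subseteq> Sub L I0" unfolding U_def using R_Sub by blast
  have dis: "\<forall>i\<in>{..<M}. \<forall>j\<in>{..<M}. i \<noteq> j \<longrightarrow> R i \<inter> R j = {}" using R_disj by blast
  have "(\<Sum>J\<in>F. E J) \<le> (\<Sum>J\<in>U. E J)"
    by (rule sum_mono2[OF Ufin FU]) (rule E_nonneg)
  also have "\<dots> = (\<Sum>m<M. \<Sum>J\<in>R m. E J)"
    unfolding U_def by (rule sum.UNION_disjoint) (use R_fin dis in auto)
  also have "\<dots> \<le> (\<Sum>m<M. (Phi (Suc m) - Phi m) + 2 * C * (\<Sum>J\<in>R m. \<bar>a J\<bar>))"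
  proof (rule sum_mono)
    fix m assume "m \<in> {..<M}"
    have "(\<Sum>J\<in>R m. E J) \<le> (\<Sum>J\<in>R m. ((\<Sum>K\<in>child L J. Q K) - Q J) + 2 * C * \<bar>a J\<bar>)"
    proof (rule sum_mono)
      fix J assume "J \<in> R m"
      then have Jl: "J \<in> lat L" using R_sub_G G_lat by blast
      show "E J \<le> ((\<Sum>K\<in>child L J. Q K) - Q J) + 2 * C * \<bar>a J\<bar>"
        using E_le[OF Jl] unfolding Q_def by simp
    qed
    also have "\<dots> = (Phi (Suc m) - Phi m) + 2 * C * (\<Sum>J\<in>R m. \<bar>a J\<bar>)"
      by (simp add: sum.distrib sum_distrib_left Phi_Suc)
    finally show "(\<Sum>J\<in>R m. E J) \<le> (Phi (Suc m) - Phi m) + 2 * C * (\<Sum>J\<in>R m. \<bar>a J\<bar>)" .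
  qed
  also have "\<dots> = (Phi M - Phi 0) + 2 * C * (\<Sum>m<M. \<Sum>J\<in>R m. \<bar>a J\<bar>)"
    by (simp add: sum.distrib sum_distrib_left sum_lessThan_telescope)
  also have "(\<Sum>m<M. \<Sum>J\<in>R m. \<bar>a J\<bar>) = (\<Sum>J\<in>U. \<bar>a J\<bar>)"
    unfolding U_def by (rule sum.UNION_disjoint[symmetric]) (use R_fin dis in auto)
  also have "(\<Sum>J\<in>U. \<bar>a J\<bar>) \<le> C * ?mu"
  proof -
    have "(\<Sum>J\<in>U. \<bar>a J\<bar>) \<le> (\<Sum>\<^sub>\<infinity>J\<in>Sub L I0. \<bar>a J\<bar>)"
      by (rule finite_sum_le_infsum[OF car1(1)[OF I0] Ufin USub]) simp
    then show ?thesis using car1(3)[OF I0] by linarith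
  qed
  then have "(Phi M - Phi 0) + 2 * C * (\<Sum>J\<in>U. \<bar>a J\<bar>) \<le> (Phi M - Phi 0) + 2 * C * (C * ?mu)"
    using Cpos by (intro add_left_mono mult_left_mono) auto
  also have "\<dots> \<le> C\<^sup>2 * ?mu + 2 * C * (C * ?mu)" using Phi_bound[of M] Phi_nonneg[of 0] by linarith
  also have "\<dots> = 3 * C\<^sup>2 * ?mu" by (simp add: power2_eq_square algebra_simps)
  finally show ?thesis .
qed

lemma C1_I0:
  "(\<integral>\<^sup>+x\<in>I0. (\<Sum>\<^sub>\<infinity>J\<in>{J\<in>lat L. J \<subseteq> I0}. ennreal ((Delta L J g x)\<^sup>2)) \<partial>lebesgue)
     \<le> ennreal (3 * C\<^sup>2 * measure lebesgue I0)"
proof -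
  let ?T = "Sub L I0"
  have T: "{J\<in>lat L. J \<subseteq> I0} = ?T" unfolding Sub_def by simp
  have "(\<integral>\<^sup>+x\<in>I0. (\<Sum>\<^sub>\<infinity>J\<in>?T. ennreal ((Delta L J g x)\<^sup>2)) \<partial>lebesgue)
      = (\<integral>\<^sup>+x. (\<Sum>\<^sub>\<infinity>J\<in>?T. ennreal ((Delta L J g x)\<^sup>2) * indicator I0 x) \<partial>lebesgue)"
  proof (rule nn_integral_cong)
    fix x
    show "(\<Sum>\<^sub>\<infinity>J\<in>?T. ennreal ((Delta L J g x)\<^sup>2)) * indicator I0 x
        = (\<Sum>\<^sub>\<infinity>J\<in>?T. ennreal ((Delta L J g x)\<^sup>2) * indicator I0 x)"
      by (cases "x \<in> I0") simp_all
  qed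
  also have "\<dots> = (\<Sum>\<^sub>\<infinity>J\<in>?T. \<integral>\<^sup>+x. ennreal ((Delta L J g x)\<^sup>2) * indicator I0 x \<partial>lebesgue)"
  proof (rule nn_integral_infsum[OF Sub_countable])
    fix J assume "J \<in> ?T"
    then have J: "J \<in> lat L" unfolding Sub_def by blast
    have [measurable]: "I0 \<in> sets lebesgue" using lat_sets[OF I0] .
    have [measurable]: "Delta L J g \<in> borel_measurable lebesgue" using Delta_meas[OF J] .
    show "(\<lambda>x. ennreal ((Delta L J g x)\<^sup>2) * indicator I0 x) \<in> borel_measurable lebesgue" by measurable
  qed
  also have "\<dots> = (\<Sum>\<^sub>\<infinity>J\<in>?T. ennreal (E J))"
  proof (rule infsum_cong)
    fix J assume "J \<in> ?T"
    then have J: "J \<in> lat L" "J \<subseteq> I0" unfolding Sub_def by auto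
    show "(\<integral>\<^sup>+x. ennreal ((Delta L J g x)\<^sup>2) * indicator I0 x \<partial>lebesgue) = ennreal (E J)"
      by (rule E_int[OF J])
  qed
  also have "\<dots> = (SUP F\<in>{F. finite F \<and> F \<subseteq> ?T}. sum (\<lambda>J. ennreal (E J)) F)"
    by (rule nonneg_infsum_complete) simp
  also have "\<dots> \<le> ennreal (3 * C\<^sup>2 * measure lebesgue I0)"
  proof (rule SUP_least)
    fix F assume "F \<in> {F. finite F \<and> F \<subseteq> ?T}"
    then have F: "finite F" "F \<subseteq> ?T" by auto
    have "sum (\<lambda>J. ennreal (E J)) F = ennreal (\<Sum>J\<in>F. E J)" by (rule sum_ennreal) (rule E_nonneg)
    also have "\<dots> \<le> ennreal (3 * C\<^sup>2 * measure lebesgue I0)" by (rule ennreal_leI[OF fin_bound[OF F]])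
    finally show "sum (\<lambda>J. ennreal (E J)) F \<le> ennreal (3 * C\<^sup>2 * measure lebesgue I0)" .
  qed
  finally show ?thesis unfolding T .
qed

end



context probC begin

lemma tele_I: "I \<in> lat L \<Longrightarrow> tele L a C I"
  unfolding tele_def tele_axioms_def probC_def probC_axioms_def prob_def prob_axioms_def latt_def
  using lat_L AEfin locint cb by simp

lemma ennsqrt_le: assumes "y \<le> ennreal (3 * C\<^sup>2)" shows "ennsqrt y \<le> ennreal (2 * C)"
proof -
  have "0 \<le> 3 * C\<^sup>2" by simp
  then obtain q where q: "0 \<le> q" "y = ennreal q" "q \<le> 3 * C\<^sup>2" using assms le_ennreal_iff by blast
  have cc: "0 \<le> C * C" by simp
  have "q \<le> (2 * C)\<^sup>2" using q(3) cc unfolding power2_eq_square by linarith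
  then have "sqrt q \<le> sqrt ((2 * C)\<^sup>2)" by (rule real_sqrt_le_mono)
  also have "\<dots> = 2 * C" using Cpos by (simp only: real_sqrt_abs)
  finally have "sqrt q \<le> 2 * C" .
  then show ?thesis unfolding ennsqrt_def using q by (simp add: ennreal_leI)
qed

lemma C1_bound: "BMO_C1 L g \<le> ennreal (2 * C)"
  unfolding BMO_C1_def
proof (rule SUP_least)
  fix I assume I: "I \<in> lat L"
  interpret T: tele L a C I by (rule tele_I[OF I])
  let ?X = "\<integral>\<^sup>+x\<in>I. (\<Sum>\<^sub>\<infinity>J\<in>{J\<in>lat L. J \<subseteq> I}. ennreal ((Delta L J g x)\<^sup>2)) \<partial>lebesgue"
  have pI: "0 < measure lebesgue I" using lat_pos[OF I] .
  have "ennreal (1 / measure lebesgue I) * ?X \<le> ennreal (1 / measure lebesgue I) * ennreal (3 * C\<^sup>2 * measure lebesgue I)"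
    by (rule mult_left_mono[OF T.C1_I0]) simp
  also have "\<dots> = ennreal (1 / measure lebesgue I * (3 * C\<^sup>2 * measure lebesgue I))"
    using pI by (simp add: ennreal_mult'[symmetric])
  also have "1 / measure lebesgue I * (3 * C\<^sup>2 * measure lebesgue I) = 3 * C\<^sup>2" using pI by simp
  finally show "ennsqrt (ennreal (1 / measure lebesgue I) * ?X) \<le> ennreal (2 * C)" by (rule ennsqrt_le)
qed

end

theorem theorem2:
  fixes L :: "int \<Rightarrow> real set set" and a :: "real set \<Rightarrow> real"
  assumes "lattice L"
    and "carleson_seq L (\<lambda>I. \<bar>a I\<bar>)"
    and "AE x in lebesgue. abs_balayage L a x < \<infinity>"
    and "locally_integrable_nn (abs_balayage L a)"
  shows "in_mBMO L (balayage L a) \<and>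
         BMO_norm L (balayage L a) \<le> ennreal (2 * Carl L (\<lambda>I. \<bar>a I\<bar>))"
proof -
  have P: "prob L a" unfolding prob_def prob_axioms_def latt_def using assms by simp
  interpret prob L a by (rule P)
  define Cs where "Cs = {C. carleson_bound L (\<lambda>I. \<bar>a I\<bar>) C}"
  obtain C0 where C0: "C0 \<in> Cs" using assms(2) unfolding carleson_seq_def Cs_def by blast
  have PC: "probC L a C" if "C \<in> Cs" for C
    unfolding probC_def probC_axioms_def using P that unfolding Cs_def by simp
  have B: "BMO_norm L (balayage L a) \<le> ennreal (2 * C)" if "C \<in> Cs" for C
  proof -
    interpret probC L a C by (rule PC[OF that])
    show ?thesis unfolding BMO_norm_def using C1_bound C2_bound by simp
  qed
  have pos: "C > 0" if "C \<in> Cs" for C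
    using that unfolding Cs_def carleson_bound_def by blast
  have li: "locally_integrable (balayage L a)"
    unfolding locally_integrable_def
  proof (intro allI)
    fix x y :: real
    show "set_integrable lebesgue {x..y} (balayage L a)"
      by (rule BL(1)) (use assms(4) in \<open>auto simp: locally_integrable_nn_def\<close>)
  qed
  have c1: "BMO_C1 L (balayage L a) < top"
  proof -
    interpret probC L a C0 by (rule PC[OF C0])
    show ?thesis using C1_bound by (simp add: le_less_trans)
  qed
  have c2: "BMO_C2 L (balayage L a) < top"
  proof -
    interpret probC L a C0 by (rule PC[OF C0])
    show ?thesis using C2_bound by (simp add: le_less_trans)
  qed
  have mem: "in_mBMO L (balayage L a)" unfolding in_mBMO_def using li c1 c2 by simp
  have "0 \<le> 2 * C0" using pos[OF C0] by simp
  then obtain b where b: "0 \<le> b" "BMO_norm L (balayage L a) = ennreal b" "b \<le> 2 * C0"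
    using B[OF C0] le_ennreal_iff by blast
  have "b / 2 \<le> Inf Cs"
  proof (rule cInf_greatest)
    show "Cs \<noteq> {}" using C0 by blast
    fix C assume C: "C \<in> Cs"
    have "ennreal b \<le> ennreal (2 * C)" using B[OF C] b(2) by simp
    then have "b \<le> 2 * C" using pos[OF C] by (simp add: ennreal_le_iff)
    then show "b / 2 \<le> C" by simp
  qed
  then have "b \<le> 2 * Carl L (\<lambda>I. \<bar>a I\<bar>)" unfolding Carl_def Cs_def by simp
  then have "BMO_norm L (balayage L a) \<le> ennreal (2 * Carl L (\<lambda>I. \<bar>a I\<bar>))"
    using b(2) by (simp add: ennreal_leI)
  then show ?thesis using mem by simp
qed


end
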